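(* Let $b_+,b_->0$, $\delta_\pm\in\mathbb R$ with $b_\pm+\delta_\pm>0$, and $c>0$, and let $\hat H_{\mathrm{II}}(k)$ be the type-II interface Hamiltonian defined in the context. (i) If $\delta_+\delta_-<0$, then $0$ is a two-fold eigenvalue of $\hat H_{\mathrm{II}}(0)$ (its eigenspace in $\ell^2(\mathbb Z;\mathbb C^6)$ is two-dimensional). (ii) If $\delta_+\delta_->0$, then $\hat H_{\mathrm{II}}(0)$ is invertible; consequently $0$ is not an eigenvalue of $\hat H_{\mathrm{II}}(0)$.
   Context: Coefficients: for $n\in\mathbb Z$ let $b_n=b_+$ for $n\ge0$ and $b_n=b_-$ for $n\le-1$; $c_n=b_++\delta_+$ for $n\ge0$, $c_{-1}=c$, $c_n=b_-+\delta_-$ for $n\le-2$; $d_n=b_++\delta_+$ for $n\ge0$, $d_{-1}=d_{-2}=c$, $d_n=b_-+\delta_-$ for $n\le-3$. For $k\in[-\pi,\pi)$, $\hat H_{\mathrm{II}}(k)$ is the bounded self-adjoint operator on $\ell^2(\mathbb Z;\mathbb C^6)$ acting on $w=\{(w_{j,n})_{j=1}^6\}_{n\in\mathbb Z}$ by $(\hat H_{\mathrm{II}}(k)w)_{1,n}=-b_nw_{4,n}-b_nw_{5,n}-c_ne^{-ik}w_{6,n+1}$, $(\hat H_{\mathrm{II}}(k)w)_{2,n}=-b_nw_{4,n}-d_{n-2}e^{ik}w_{5,n-2}-b_nw_{6,n}$, $(\hat H_{\mathrm{II}}(k)w)_{3,n}=-c_nw_{4,n+1}-b_nw_{5,n}-b_nw_{6,n}$,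 $(\hat H_{\mathrm{II}}(k)w)_{4,n}=-b_nw_{1,n}-b_nw_{2,n}-c_{n-1}w_{3,n-1}$, $(\hat H_{\mathrm{II}}(k)w)_{5,n}=-b_nw_{1,n}-d_ne^{-ik}w_{2,n+2}-b_nw_{3,n}$, $(\hat H_{\mathrm{II}}(k)w)_{6,n}=-c_{n-1}e^{ik}w_{1,n-1}-b_nw_{2,n}-b_nw_{3,n}$. *)

theory Defs
  imports "HOL-Analysis.Analysis"
begin

text \<open>Elements of l2(Z; C^6) are represented as functions w :: int => nat => complex,
  where w n j is the component w_{j,n} for j in {1..6}; components outside {1..6} are zero.\<close>

type_synonym seq6 = "int \<Rightarrow> nat \<Rightarrow> complex"

definition l2_6 :: "seq6 set" where
  "l2_6 = {w. (\<forall>n j. j \<notin> {1..6} \<longrightarrow> w n j = 0) \<and>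
              (\<lambda>n. \<Sum>j\<in>{1..6}. (cmod (w n j))\<^sup>2) summable_on (UNIV :: int set)}"

definition l2_norm6 :: "seq6 \<Rightarrow> real" where
  "l2_norm6 w = sqrt (\<Sum>\<^sub>\<infinity>n\<in>(UNIV :: int set). \<Sum>j\<in>{1..6}. (cmod (w n j))\<^sup>2)"

definition bcoef :: "real \<Rightarrow> real \<Rightarrow> int \<Rightarrow> real" where
  "bcoef bp bm n = (if n \<ge> 0 then bp else bm)"

definition ccoef :: "real \<Rightarrow> real \<Rightarrow> real \<Rightarrow> real \<Rightarrow> real \<Rightarrow> int \<Rightarrow> real" where
  "ccoef bp bm dp dm c n = (if n \<ge> 0 then bp + dp else if n = -1 then c else bm + dm)"

definition dcoef :: "real \<Rightarrow> real \<Rightarrow> real \<Rightarrow> real \<Rightarrow> real \<Rightarrow> int \<Rightarrow> real" where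
  "dcoef bp bm dp dm c n = (if n \<ge> 0 then bp + dp else if n = -1 \<or> n = -2 then c else bm + dm)"

definition H_II :: "real \<Rightarrow> real \<Rightarrow> real \<Rightarrow> real \<Rightarrow> real \<Rightarrow> real \<Rightarrow> seq6 \<Rightarrow> seq6" where
  "H_II bp bm dp dm c k w n j =
    (let b = (\<lambda>m. complex_of_real (bcoef bp bm m));
         cc = (\<lambda>m. complex_of_real (ccoef bp bm dp dm c m));
         d = (\<lambda>m. complex_of_real (dcoef bp bm dp dm c m));
         ep = exp (\<i> * complex_of_real k);
         em = exp (- \<i> * complex_of_real k)
     in if j = 1 then - b n * w n 4 - b n * w n 5 - cc n * em * w (n+1) 6
        else if j = 2 then - b n * w n 4 - d (n-2) * ep * w (n-2) 5 - b n * w n 6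
        else if j = 3 then - cc n * w (n+1) 4 - b n * w n 5 - b n * w n 6
        else if j = 4 then - b n * w n 1 - b n * w n 2 - cc (n-1) * w (n-1) 3
        else if j = 5 then - b n * w n 1 - d n * em * w (n+2) 2 - b n * w n 3
        else if j = 6 then - cc (n-1) * ep * w (n-1) 1 - b n * w n 2 - b n * w n 3
        else 0)"

definition ker_H_II :: "real \<Rightarrow> real \<Rightarrow> real \<Rightarrow> real \<Rightarrow> real \<Rightarrow> real \<Rightarrow> seq6 set" where
  "ker_H_II bp bm dp dm c k = {w \<in> l2_6. H_II bp bm dp dm c k w = (\<lambda>n j. 0)}"

definition two_dim :: "seq6 set \<Rightarrow> bool" where
  "two_dim S \<longleftrightarrow> (\<exists>u\<in>S. \<exists>v\<in>S.
      (\<forall>a b :: complex. (\<lambda>n j. a * u n j + b * v n j) = (\<lambda>n j. 0) \<longrightarrow> a = 0 \<and> b = 0) \<and>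
      (\<forall>w\<in>S. \<exists>a b :: complex. w = (\<lambda>n j. a * u n j + b * v n j)))"

definition invertible_l2 :: "(seq6 \<Rightarrow> seq6) \<Rightarrow> bool" where
  "invertible_l2 A \<longleftrightarrow> (\<exists>G. (\<forall>v\<in>l2_6. G v \<in> l2_6 \<and> A (G v) = v) \<and>
                            (\<forall>w\<in>l2_6. G (A w) = w) \<and>
                            (\<exists>C. \<forall>v\<in>l2_6. l2_norm6 (G v) \<le> C * l2_norm6 v))"

end

theory Submission
  imports Defs
begin

definition l2 :: "(int \<Rightarrow> complex) \<Rightarrow> bool" where
  "l2 f \<longleftrightarrow> (\<lambda>n. (cmod (f n))\<^sup>2) summable_on (UNIV :: int set)"

definition nrm :: "(int \<Rightarrow> complex) \<Rightarrow> real" where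
  "nrm f = (\<Sum>\<^sub>\<infinity>n\<in>(UNIV::int set). (cmod (f n))\<^sup>2)"

lemma nrm_nonneg: "nrm f \<ge> 0"
  unfolding nrm_def by (rule infsum_nonneg) auto

lemma l2_finite_le: "l2 f \<Longrightarrow> finite F \<Longrightarrow> (\<Sum>n\<in>F. (cmod (f n))\<^sup>2) \<le> nrm f"
  unfolding l2_def nrm_def by (rule finite_sum_le_infsum) auto

lemma l2I:
  assumes "\<And>F. finite F \<Longrightarrow> (\<Sum>n\<in>F. (cmod (f n))\<^sup>2) \<le> C"
  shows "l2 f \<and> nrm f \<le> C"
proof -
  have s: "(\<lambda>n. (cmod (f n))\<^sup>2) summable_on (UNIV :: int set)"
    by (rule nonneg_bdd_above_summable_on) (auto intro!: bdd_aboveI2 assms)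
  moreover have "nrm f \<le> C" unfolding nrm_def
    by (rule infsum_le_finite_sums[OF s]) (use assms in auto)
  ultimately show ?thesis unfolding l2_def by auto
qed

lemma l2_pt: "l2 f \<Longrightarrow> (cmod (f n))\<^sup>2 \<le> nrm f"
  using l2_finite_le[of f "{n}"] by simp

lemma l2_zero: "l2 (\<lambda>n. 0) \<and> nrm (\<lambda>n. 0) = 0"
  using l2I[of "\<lambda>n. 0" 0] nrm_nonneg[of "\<lambda>n. 0"] by auto

lemma l2_add:
  assumes "l2 f" "l2 g"
  shows "l2 (\<lambda>n. f n + g n) \<and> nrm (\<lambda>n. f n + g n) \<le> 2 * nrm f + 2 * nrm g"
proof (rule l2I)
  fix F :: "int set" assume F: "finite F"
  have "(\<Sum>n\<in>F. (cmod (f n + g n))\<^sup>2) \<le> (\<Sum>n\<in>F. 2 * (cmod (f n))\<^sup>2 + 2 * (cmod (g n))\<^sup>2)"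
  proof (rule sum_mono)
    fix n
    have "cmod (f n + g n) \<le> cmod (f n) + cmod (g n)" by (rule norm_triangle_ineq)
    hence "(cmod (f n + g n))\<^sup>2 \<le> (cmod (f n) + cmod (g n))\<^sup>2"
      by (simp add: power_mono)
    also have "\<dots> \<le> 2 * (cmod (f n))\<^sup>2 + 2 * (cmod (g n))\<^sup>2"
      using zero_le_power2[of "cmod (f n) - cmod (g n)"]
      by (simp add: power2_eq_square algebra_simps)
    finally show "(cmod (f n + g n))\<^sup>2 \<le> 2 * (cmod (f n))\<^sup>2 + 2 * (cmod (g n))\<^sup>2" .
  qed
  also have "\<dots> = 2 * (\<Sum>n\<in>F. (cmod (f n))\<^sup>2) + 2 * (\<Sum>n\<in>F. (cmod (g n))\<^sup>2)"
    by (simp add: sum.distrib sum_distrib_left)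
  also have "\<dots> \<le> 2 * nrm f + 2 * nrm g"
    using l2_finite_le[OF assms(1) F] l2_finite_le[OF assms(2) F] by linarith
  finally show "(\<Sum>n\<in>F. (cmod (f n + g n))\<^sup>2) \<le> 2 * nrm f + 2 * nrm g" .
qed

lemma l2_mult:
  assumes "\<And>n. cmod (m n) \<le> B" "l2 f"
  shows "l2 (\<lambda>n. m n * f n) \<and> nrm (\<lambda>n. m n * f n) \<le> B\<^sup>2 * nrm f"
proof (rule l2I)
  fix F :: "int set" assume F: "finite F"
  have B: "0 \<le> B" using assms(1)[of 0] norm_ge_zero[of "m 0"] by linarith
  have "(\<Sum>n\<in>F. (cmod (m n * f n))\<^sup>2) \<le> (\<Sum>n\<in>F. B\<^sup>2 * (cmod (f n))\<^sup>2)"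
  proof (rule sum_mono)
    fix n
    have "cmod (m n * f n) \<le> B * cmod (f n)"
      by (simp add: norm_mult assms(1) mult_right_mono)
    hence "(cmod (m n * f n))\<^sup>2 \<le> (B * cmod (f n))\<^sup>2" by (simp add: power_mono)
    thus "(cmod (m n * f n))\<^sup>2 \<le> B\<^sup>2 * (cmod (f n))\<^sup>2" by (simp add: power_mult_distrib)
  qed
  also have "\<dots> = B\<^sup>2 * (\<Sum>n\<in>F. (cmod (f n))\<^sup>2)" by (simp add: sum_distrib_left)
  also have "\<dots> \<le> B\<^sup>2 * nrm f"
    using l2_finite_le[OF assms(2) F] by (simp add: mult_left_mono)
  finally show "(\<Sum>n\<in>F. (cmod (m n * f n))\<^sup>2) \<le> B\<^sup>2 * nrm f" .
qed

lemma l2_comp: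
  assumes "inj h" "l2 f"
  shows "l2 (\<lambda>n. f (h n)) \<and> nrm (\<lambda>n. f (h n)) \<le> nrm f"
proof (rule l2I)
  fix F :: "int set" assume F: "finite F"
  have "(\<Sum>n\<in>F. (cmod (f (h n)))\<^sup>2) = (\<Sum>n\<in>h ` F. (cmod (f n))\<^sup>2)"
    using assms(1) by (simp add: sum.reindex inj_on_subset[of h UNIV])
  also have "\<dots> \<le> nrm f" using l2_finite_le[OF assms(2)] F by simp
  finally show "(\<Sum>n\<in>F. (cmod (f (h n)))\<^sup>2) \<le> nrm f" .
qed

lemma l2_shift: "l2 f \<Longrightarrow> l2 (\<lambda>n. f (n + k)) \<and> nrm (\<lambda>n. f (n + k)) \<le> nrm f"
  using l2_comp[of "\<lambda>n. n + k" f] by (simp add: inj_on_def)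

lemma l2_refl: "l2 f \<Longrightarrow> l2 (\<lambda>n. f (- n)) \<and> nrm (\<lambda>n. f (- n)) \<le> nrm f"
  using l2_comp[of "\<lambda>n. - n" f] by (simp add: inj_on_def)

lemma l2_cmult: "l2 f \<Longrightarrow> l2 (\<lambda>n. a * f n) \<and> nrm (\<lambda>n. a * f n) \<le> (cmod a)\<^sup>2 * nrm f"
  using l2_mult[of "\<lambda>n. a" "cmod a" f] by simp

lemma l2_tail_up:
  assumes "l2 f"
  shows "(\<lambda>k. (cmod (f (n + int k)))\<^sup>2) \<longlonglongrightarrow> 0"
proof -
  have "summable (\<lambda>k. (cmod (f (n + int k)))\<^sup>2)"
  proof (rule summableI_nonneg_bounded)
    fix L
    have "(\<Sum>k<L. (cmod (f (n + int k)))\<^sup>2) = (\<Sum>m\<in>(\<lambda>k. n + int k) ` {..<L}. (cmod (f m))\<^sup>2)"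
      by (simp add: sum.reindex inj_on_def)
    also have "\<dots> \<le> nrm f" using l2_finite_le[OF assms] by simp
    finally show "(\<Sum>k<L. (cmod (f (n + int k)))\<^sup>2) \<le> nrm f" .
  qed auto
  thus ?thesis by (rule summable_LIMSEQ_zero)
qed

lemma l2_tail_down:
  assumes "l2 f"
  shows "(\<lambda>k. (cmod (f (n - int k)))\<^sup>2) \<longlonglongrightarrow> 0"
proof -
  have "(\<lambda>k. (cmod (f (- (- n + int k))))\<^sup>2) \<longlonglongrightarrow> 0"
    by (rule l2_tail_up[OF conjunct1[OF l2_refl[OF assms]]])
  moreover have "(\<lambda>k. (cmod (f (- (- n + int k))))\<^sup>2) = (\<lambda>k. (cmod (f (n - int k)))\<^sup>2)"
    by (rule ext) (simp add: algebra_simps)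
  ultimately show ?thesis by simp
qed

fun Pr :: "(int \<Rightarrow> complex) \<Rightarrow> int \<Rightarrow> nat \<Rightarrow> complex" where
  "Pr \<rho> n 0 = 1"
| "Pr \<rho> n (Suc k) = \<rho> (n - 1) * Pr \<rho> (n - 1) k"

lemma Pr_bound:
  assumes "\<And>n. cmod (\<rho> n) \<le> r"
  shows "cmod (Pr \<rho> n k) \<le> r ^ k"
proof (induction k arbitrary: n)
  case 0 then show ?case by simp
next
  case (Suc k)
  have r0: "0 \<le> r" using assms[of 0] norm_ge_zero[of "\<rho> 0"] by linarith
  have "cmod (Pr \<rho> n (Suc k)) = cmod (\<rho> (n - 1)) * cmod (Pr \<rho> (n - 1) k)"
    by (simp add: norm_mult)
  also have "\<dots> \<le> r * r ^ k"
    by (rule mult_mono) (use assms Suc r0 in auto)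
  finally show ?case by simp
qed

lemma jensen_sq:
  fixes r x y :: real
  assumes "0 \<le> r" "r < 1"
  shows "(r * x + y)\<^sup>2 \<le> r * x\<^sup>2 + y\<^sup>2 / (1 - r)"
proof -
  have "r * x\<^sup>2 + y\<^sup>2 / (1 - r) - (r * x + y)\<^sup>2 = r / (1 - r) * ((1 - r) * x - y)\<^sup>2"
    using assms by (simp add: field_simps power2_eq_square)
  moreover have "r / (1 - r) * ((1 - r) * x - y)\<^sup>2 \<ge> 0" using assms by simp
  ultimately show ?thesis by linarith
qed

lemma l2_bound_pt: "l2 u \<Longrightarrow> cmod (u n) \<le> sqrt (nrm u)"
  using l2_pt[of u n] real_le_rsqrt by blast

lemma shift_sum_int: "(\<Sum>n\<in>{a..b}. g (n + 1)) = (\<Sum>n\<in>{a+1..b+1::int}. g n)"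
proof -
  have "(\<lambda>n. n + 1) ` {a..b} = {a+1..b+1}"
    by (auto simp: image_iff intro!: bexI[where x="_ - 1"])
  moreover have "inj_on (\<lambda>n::int. n + 1) {a..b}" by (auto simp: inj_on_def)
  ultimately show ?thesis using sum.reindex[of "\<lambda>n::int. n + 1" "{a..b}" g] by (simp add: o_def)
qed

lemma finite_int_sub_interval:
  fixes F :: "int set"
  assumes "finite F" "F \<noteq> {}"
  shows "F \<subseteq> {Min F..Max F}"
  using assms by auto

lemma solve_uniform:
  fixes \<rho> :: "int \<Rightarrow> complex" and r :: real
  assumes r0: "0 \<le> r" and r1: "r < 1" and rb: "\<And>n. cmod (\<rho> n) \<le> r"
  shows "\<exists>K. \<forall>u. l2 u \<longrightarrow> (\<exists>D. l2 D \<and> nrm D \<le> K * nrm u \<and> (\<forall>n. D (n+1) = \<rho> n * D n + u n))"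
proof (rule exI[of _ "1 / (1 - r) ^ 3"], intro allI impI)
  fix u assume u: "l2 u"
  define Bu where "Bu = sqrt (nrm u)"
  have ub: "\<And>m. cmod (u m) \<le> Bu" unfolding Bu_def by (rule l2_bound_pt[OF u])
  have Bu0: "0 \<le> Bu" unfolding Bu_def using nrm_nonneg by simp
  define D where "D n = (\<Sum>k. Pr \<rho> n k * u (n - 1 - int k))" for n
  have tb: "cmod (Pr \<rho> n k * u (n - 1 - int k)) \<le> Bu * r ^ k" for n k
  proof -
    have "cmod (Pr \<rho> n k) * cmod (u (n - 1 - int k)) \<le> r ^ k * Bu"
      by (rule mult_mono) (use Pr_bound[OF rb] ub r0 in auto)
    thus ?thesis by (simp add: norm_mult mult.commute)
  qed
  have gs: "summable (\<lambda>k. Bu * r ^ k)" using r0 r1 by (simp add: summable_mult)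
  have sm: "summable (\<lambda>k. Pr \<rho> n k * u (n - 1 - int k))" for n
    by (rule summable_comparison_test'[OF gs]) (use tb in auto)
  have smn: "summable (\<lambda>k. cmod (Pr \<rho> n k * u (n - 1 - int k)))" for n
    by (rule summable_comparison_test'[OF gs]) (use tb in auto)
  have Db: "cmod (D n) \<le> Bu / (1 - r)" for n
  proof -
    have "cmod (D n) \<le> (\<Sum>k. cmod (Pr \<rho> n k * u (n - 1 - int k)))"
      unfolding D_def by (rule summable_norm[OF smn])
    also have "\<dots> \<le> (\<Sum>k. Bu * r ^ k)"
      by (rule suminf_le[OF tb smn gs])
    also have "\<dots> = Bu / (1 - r)"
      using r0 r1 by (simp add: suminf_mult suminf_geometric divide_inverse)
    finally show ?thesis .
  qed
  have rec: "D (n+1) = \<rho> n * D n + u n" for n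
  proof -
    have "D (n+1) = Pr \<rho> (n+1) 0 * u (n + 1 - 1 - int 0) + (\<Sum>k. Pr \<rho> (n+1) (Suc k) * u (n + 1 - 1 - int (Suc k)))"
      unfolding D_def using suminf_split_head[OF sm[of "n+1"]] by simp
    also have "(\<Sum>k. Pr \<rho> (n+1) (Suc k) * u (n + 1 - 1 - int (Suc k))) = (\<Sum>k. \<rho> n * (Pr \<rho> n k * u (n - 1 - int k)))"
      by (simp add: algebra_simps)
    also have "\<dots> = \<rho> n * D n" unfolding D_def by (rule suminf_mult[OF sm])
    finally show ?thesis by simp
  qed
  have en: "(cmod (D (n+1)))\<^sup>2 \<le> r * (cmod (D n))\<^sup>2 + (cmod (u n))\<^sup>2 / (1 - r)" for n
  proof -
    have "cmod (D (n+1)) \<le> r * cmod (D n) + cmod (u n)"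
      unfolding rec by (rule order_trans[OF norm_triangle_ineq]) (simp add: norm_mult mult_right_mono rb)
    hence "(cmod (D (n+1)))\<^sup>2 \<le> (r * cmod (D n) + cmod (u n))\<^sup>2"
      by (simp add: power_mono)
    also have "\<dots> \<le> r * (cmod (D n))\<^sup>2 + (cmod (u n))\<^sup>2 / (1 - r)"
      by (rule jensen_sq[OF r0 r1])
    finally show ?thesis .
  qed
  have Dsq: "(cmod (D n))\<^sup>2 \<le> nrm u / (1 - r)\<^sup>2" for n
  proof -
    have "(cmod (D n))\<^sup>2 \<le> (Bu / (1 - r))\<^sup>2" by (rule power_mono[OF Db]) simp
    also have "\<dots> = nrm u / (1 - r)\<^sup>2" unfolding Bu_def using nrm_nonneg[of u]
      by (simp add: power_divide)
    finally show ?thesis .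
  qed
  have ivl: "(\<Sum>n\<in>{a+1..b}. (cmod (D n))\<^sup>2) \<le> nrm u / (1 - r) ^ 3" if ab: "a \<le> b" for a b :: int
  proof -
    define S where "S = (\<Sum>n\<in>{a+1..b}. (cmod (D n))\<^sup>2)"
    define U where "U = (\<Sum>n\<in>{a..b}. (cmod (u n))\<^sup>2)"
    have U: "U \<le> nrm u" unfolding U_def by (rule l2_finite_le[OF u]) simp
    have "(\<Sum>n\<in>{a..b}. (cmod (D (n+1)))\<^sup>2) \<le> (\<Sum>n\<in>{a..b}. r * (cmod (D n))\<^sup>2 + (cmod (u n))\<^sup>2 / (1 - r))"
      by (rule sum_mono[OF en])
    also have "\<dots> = r * (\<Sum>n\<in>{a..b}. (cmod (D n))\<^sup>2) + U / (1 - r)"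
      unfolding U_def by (simp add: sum.distrib sum_distrib_left sum_divide_distrib)
    also have "(\<Sum>n\<in>{a..b}. (cmod (D n))\<^sup>2) = (cmod (D a))\<^sup>2 + S"
    proof -
      have "{a..b} = insert a {a+1..b}" using ab by auto
      thus ?thesis unfolding S_def by (simp add: sum.insert)
    qed
    finally have 1: "(\<Sum>n\<in>{a..b}. (cmod (D (n+1)))\<^sup>2) \<le> r * ((cmod (D a))\<^sup>2 + S) + U / (1 - r)" .
    have "(\<Sum>n\<in>{a..b}. (cmod (D (n+1)))\<^sup>2) = (\<Sum>n\<in>{a+1..b+1}. (cmod (D n))\<^sup>2)"
      by (rule shift_sum_int)
    also have "(\<Sum>n\<in>{a+1..b+1}. (cmod (D n))\<^sup>2) = (cmod (D (b+1)))\<^sup>2 + S"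
    proof -
      have "{a+1..b+1} = insert (b+1) {a+1..b}" using ab by auto
      thus ?thesis unfolding S_def by (simp add: sum.insert)
    qed
    finally have 2: "S \<le> (\<Sum>n\<in>{a..b}. (cmod (D (n+1)))\<^sup>2)" by simp
    have "(1 - r) * S \<le> r * (cmod (D a))\<^sup>2 + U / (1 - r)" using 1 2 by (simp add: algebra_simps)
    also have "\<dots> \<le> r * (nrm u / (1 - r)\<^sup>2) + nrm u / (1 - r)"
      by (intro add_mono mult_left_mono divide_right_mono Dsq U) (use r0 r1 in auto)
    also have "\<dots> = (1 - r) * (nrm u / (1 - r) ^ 3)"
    proof -
      define q where "q = 1 - r"
      have q: "q \<noteq> 0" "r = 1 - q" using r1 unfolding q_def by auto
      show ?thesis unfolding q(2) using q(1) by (simp add: field_simps power2_eq_square power3_eq_cube)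
    qed
    finally have "(1 - r) * S \<le> (1 - r) * (nrm u / (1 - r) ^ 3)" .
    hence "S \<le> nrm u / (1 - r) ^ 3" by (rule mult_left_le_imp_le) (use r1 in simp)
    thus ?thesis unfolding S_def .
  qed
  have "l2 D \<and> nrm D \<le> nrm u / (1 - r) ^ 3"
  proof (rule l2I)
    fix F :: "int set" assume F: "finite F"
    show "(\<Sum>n\<in>F. (cmod (D n))\<^sup>2) \<le> nrm u / (1 - r) ^ 3"
    proof (cases "F = {}")
      case True then show ?thesis using nrm_nonneg[of u] r1 by simp
    next
      case False
      have "(\<Sum>n\<in>F. (cmod (D n))\<^sup>2) \<le> (\<Sum>n\<in>{Min F - 1 + 1..Max F}. (cmod (D n))\<^sup>2)"
        by (rule sum_mono2) (use F False in auto)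
      also have "\<dots> \<le> nrm u / (1 - r) ^ 3"
      proof (rule ivl)
        obtain x where "x \<in> F" using False by auto
        thus "Min F - 1 \<le> Max F" using Min_le[OF F, of x] Max_ge[OF F, of x] by linarith
      qed
      finally show ?thesis .
    qed
  qed
  then show "\<exists>D. l2 D \<and> nrm D \<le> 1 / (1 - r) ^ 3 * nrm u \<and> (\<forall>n. D (n+1) = \<rho> n * D n + u n)"
    using rec by (intro exI[of _ D]) auto
qed

lemma solve_fwd:
  fixes \<rho> :: "int \<Rightarrow> complex"
  assumes rB: "\<And>n. cmod (\<rho> n) \<le> B" and r1: "r < 1" and rM: "\<And>n. \<bar>n\<bar> \<ge> M \<Longrightarrow> cmod (\<rho> n) \<le> r"
  shows "\<exists>K. \<forall>u. l2 u \<longrightarrow> (\<exists>D. l2 D \<and> nrm D \<le> K * nrm u \<and> (\<forall>n. D (n+1) = \<rho> n * D n + u n))"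
proof -
  define r' where "r' = max r (1/2)"
  have r'0: "0 < r'" and r'1: "r' < 1" and rr': "r \<le> r'" using r1 unfolding r'_def by auto
  define M' where "M' = max M 0"
  have rM': "\<And>n. \<bar>n\<bar> \<ge> M' \<Longrightarrow> cmod (\<rho> n) \<le> r'" using rM rr' unfolding M'_def by force
  have M'0: "M' \<ge> 0" unfolding M'_def by simp
  define lam where "lam = max 1 (B / r')"
  have l1: "1 \<le> lam" and lB: "B \<le> lam * r'" using r'0 unfolding lam_def
    by (auto simp: field_simps max_def)
  define w :: "int \<Rightarrow> real" where "w n = lam ^ nat (min (max n (-M')) M' + M')" for n
  define W where "W = lam ^ nat (2 * M')"
  have w1: "1 \<le> w n" for n unfolding w_def using l1 by simp
  have wW: "w n \<le> W" for n unfolding w_def W_def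
    by (rule power_increasing) (use l1 M'0 in auto)
  define \<rho>' where "\<rho>' n = \<rho> n * complex_of_real (w n / w (n+1))" for n
  have \<rho>'b: "cmod (\<rho>' n) \<le> r'" for n
  proof (cases "n \<ge> M' \<or> n < - M'")
    case True
    hence "w n = w (n+1)" unfolding w_def by auto
    moreover have "cmod (\<rho> n) \<le> r'" using True M'0 by (intro rM') auto
    moreover have "w n > 0" using w1[of n] by simp
    ultimately show ?thesis unfolding \<rho>'_def by simp
  next
    case False
    hence "nat (n + 1 + M') = Suc (nat (n + M'))" by auto
    moreover have "min (max (n+1) (-M')) M' = n + 1" "min (max n (-M')) M' = n" using False by auto
    ultimately have "w (n+1) = lam * w n" unfolding w_def by simp
    hence "\<rho>' n = \<rho> n / complex_of_real lam" unfolding \<rho>'_def using w1[of n] l1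
      by (simp add: divide_simps)
    hence "cmod (\<rho>' n) = cmod (\<rho> n) / lam" using l1 by (simp add: norm_divide)
    also have "\<dots> \<le> B / lam" by (rule divide_right_mono[OF rB]) (use l1 in simp)
    also have "\<dots> \<le> r'" using lB l1 by (simp add: divide_simps mult.commute)
    finally show ?thesis .
  qed
  obtain K where K: "\<forall>u. l2 u \<longrightarrow> (\<exists>E. l2 E \<and> nrm E \<le> K * nrm u \<and> (\<forall>n. E (n+1) = \<rho>' n * E n + u n))"
    using solve_uniform[of r' \<rho>'] r'0 r'1 \<rho>'b by auto
  show ?thesis
  proof (rule exI[of _ "W\<^sup>2 * max K 0"], intro allI impI)
    fix u assume u: "l2 u"
    define u' where "u' n = complex_of_real (1 / w (n+1)) * u n" for n
    have u'l: "l2 u' \<and> nrm u' \<le> 1\<^sup>2 * nrm u" unfolding u'_def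
    proof (rule l2_mult[OF _ u])
      fix n
      have "cmod (complex_of_real (1 / w (n+1))) = 1 / w (n+1)" using w1[of "n+1"] by (simp add: norm_divide)
      also have "\<dots> \<le> 1" using w1[of "n+1"] by simp
      finally show "cmod (complex_of_real (1 / w (n+1))) \<le> 1" .
    qed
    obtain E where E: "l2 E" "nrm E \<le> K * nrm u'" "\<And>n. E (n+1) = \<rho>' n * E n + u' n"
      using K u'l by blast
    define D where "D n = complex_of_real (w n) * E n" for n
    have Dl: "l2 D \<and> nrm D \<le> W\<^sup>2 * nrm E" unfolding D_def
      by (rule l2_mult[OF _ E(1)]) (metis abs_of_nonneg norm_of_real wW w1 order_trans zero_le_one)
    have "nrm D \<le> W\<^sup>2 * (max K 0 * nrm u)"
    proof -
      have "K * nrm u' \<le> max K 0 * nrm u'" by (rule mult_right_mono) (auto simp: nrm_nonneg)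
      also have "\<dots> \<le> max K 0 * nrm u" using u'l by (intro mult_left_mono) auto
      finally have "nrm E \<le> max K 0 * nrm u" using E(2) by linarith
      thus ?thesis using Dl by (meson mult_left_mono order_trans zero_le_power2)
    qed
    moreover have "D (n+1) = \<rho> n * D n + u n" for n
    proof -
      have "w (n+1) > 0" using w1[of "n+1"] by simp
      thus ?thesis unfolding D_def E(3) \<rho>'_def u'_def using w1[of n]
        by (simp add: field_simps)
    qed
    ultimately show "\<exists>D. l2 D \<and> nrm D \<le> W\<^sup>2 * max K 0 * nrm u \<and> (\<forall>n. D (n+1) = \<rho> n * D n + u n)"
      using Dl by (intro exI[of _ D]) (auto simp: mult.assoc)
  qed
qed

lemma solve_bwd:
  fixes \<rho> :: "int \<Rightarrow> complex"
  assumes rB: "\<And>n. cmod (\<rho> n) \<le> B" and r1: "r < 1" and rM: "\<And>n. \<bar>n\<bar> \<ge> M \<Longrightarrow> cmod (\<rho> n) \<le> r"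
  shows "\<exists>K. \<forall>u. l2 u \<longrightarrow> (\<exists>D. l2 D \<and> nrm D \<le> K * nrm u \<and> (\<forall>n. D n = \<rho> n * D (n+1) + u n))"
proof -
  obtain K where K: "\<forall>u. l2 u \<longrightarrow> (\<exists>E. l2 E \<and> nrm E \<le> K * nrm u \<and> (\<forall>m. E (m+1) = \<rho> (-m-1) * E m + u m))"
    using solve_fwd[of "\<lambda>m. \<rho> (-m-1)" B r "M+1"] rB r1 rM by force
  show ?thesis
  proof (rule exI[of _ "max K 0"], intro allI impI)
    fix u assume u: "l2 u"
    have u2: "l2 (\<lambda>m. u (-m-1)) \<and> nrm (\<lambda>m. u (-m-1)) \<le> nrm u"
      using l2_comp[of "\<lambda>m. -m-1" u] u by (simp add: inj_on_def)
    obtain E where E: "l2 E" "nrm E \<le> K * nrm (\<lambda>m. u (-m-1))" "\<And>m. E (m+1) = \<rho> (-m-1) * E m + u (-m-1)"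
      using K u2 by blast
    have D: "l2 (\<lambda>n. E (-n)) \<and> nrm (\<lambda>n. E (-n)) \<le> nrm E" by (rule l2_refl[OF E(1)])
    have "K * nrm (\<lambda>m. u (-m-1)) \<le> max K 0 * nrm (\<lambda>m. u (-m-1))" by (rule mult_right_mono) (auto simp: nrm_nonneg)
    also have "\<dots> \<le> max K 0 * nrm u" using u2 by (intro mult_left_mono) auto
    finally have "nrm (\<lambda>n. E (-n)) \<le> max K 0 * nrm u" using D E(2) by linarith
    moreover have "E (-n) = \<rho> n * E (-(n+1)) + u n" for n
      using E(3)[of "-n-1"] by simp
    ultimately show "\<exists>D. l2 D \<and> nrm D \<le> max K 0 * nrm u \<and> (\<forall>n. D n = \<rho> n * D (n+1) + u n)"
      using D by (intro exI[of _ "\<lambda>n. E (-n)"]) auto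
  qed
qed

fun Pp :: "(int \<Rightarrow> complex) \<Rightarrow> nat \<Rightarrow> complex" where
  "Pp \<rho> 0 = 1"
| "Pp \<rho> (Suc k) = \<rho> (int k) * Pp \<rho> k"

fun Pm :: "(int \<Rightarrow> complex) \<Rightarrow> nat \<Rightarrow> complex" where
  "Pm \<rho> 0 = 1"
| "Pm \<rho> (Suc k) = Pm \<rho> k / \<rho> (- int k - 1)"

definition ps :: "(int \<Rightarrow> complex) \<Rightarrow> int \<Rightarrow> complex" where
  "ps \<rho> n = (if 0 \<le> n then Pp \<rho> (nat n) else Pm \<rho> (nat (- n)))"

lemma ps_0: "ps \<rho> 0 = 1" by (simp add: ps_def)

lemma ps_step:
  assumes "\<And>n. \<rho> n \<noteq> 0"
  shows "ps \<rho> (n+1) = \<rho> n * ps \<rho> n"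
proof (cases "0 \<le> n")
  case True
  hence "nat (n+1) = Suc (nat n)" by auto
  thus ?thesis using True by (simp add: ps_def)
next
  case False
  show ?thesis
  proof (cases "n = -1")
    case True then show ?thesis using assms[of "-1"] by (simp add: ps_def)
  next
    case False': False
    define k where "k = nat (- n - 1)"
    have k: "nat (-n) = Suc k" "nat (- (n+1)) = k" "n = - int k - 1" using False False' unfolding k_def by auto
    show ?thesis using False False' assms[of n] unfolding ps_def k(1,2)
      by (simp add: k(3)[symmetric])
  qed
qed

lemma rec_unique:
  fixes f g :: "int \<Rightarrow> complex" and k :: int
  assumes nz: "\<And>n. \<rho> n \<noteq> 0"
    and f: "\<And>n. f (n+1) = \<rho> n * f n" and g: "\<And>n. g (n+1) = \<rho> n * g n"
    and k: "f k = g k"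
  shows "f n = g n"
proof (induction n rule: int_induct[where k=k])
  case base then show ?case by (rule k)
next
  case (step1 i) then show ?case by (simp add: f g)
next
  case (step2 i)
  have "\<rho> (i - 1) * f (i - 1) = \<rho> (i - 1) * g (i - 1)"
    using f[of "i-1"] g[of "i-1"] step2 by simp
  thus ?case using nz[of "i-1"] by simp
qed

lemma ps_unique:
  assumes nz: "\<And>n. \<rho> n \<noteq> 0" and f: "\<And>n. f (n+1) = \<rho> n * f n"
  shows "f n = f 0 * ps \<rho> n"
proof -
  have "f n = (\<lambda>n. f 0 * ps \<rho> n) n"
    by (rule rec_unique[where \<rho>=\<rho> and k=0]) (auto simp: ps_step[where \<rho>=\<rho>, OF nz] ps_0 nz f)
  thus ?thesis by simp
qed

lemma zero_left:
  assumes l: "l2 f" and f: "\<And>n. f (n+1) = \<rho> n * f n" and b: "\<And>n. n \<le> M \<Longrightarrow> cmod (\<rho> n) \<le> 1"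
  shows "f n = 0"
proof -
  have low: "f n = 0" if n: "n \<le> M + 1" for n
  proof -
    have mono: "cmod (f n) \<le> cmod (f (n - int k))" for k
    proof (induction k)
      case 0 then show ?case by simp
    next
      case (Suc k)
      have "f (n - int k) = \<rho> (n - int (Suc k)) * f (n - int (Suc k))"
        using f[of "n - int (Suc k)"] by simp
      hence e: "cmod (f (n - int k)) = cmod (\<rho> (n - int (Suc k))) * cmod (f (n - int (Suc k)))"
        by (simp add: norm_mult)
      have bb: "cmod (\<rho> (n - int (Suc k))) \<le> 1" by (rule b) (use n in simp)
      have "cmod (f (n - int k)) \<le> 1 * cmod (f (n - int (Suc k)))"
        unfolding e by (rule mult_right_mono[OF bb]) simp
      thus ?case using Suc by simp
    qed
    have "(cmod (f n))\<^sup>2 \<le> 0"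
      by (rule LIMSEQ_le_const[OF l2_tail_down[OF l, of n]]) (auto intro!: power_mono mono)
    thus ?thesis by simp
  qed
  show ?thesis
  proof (induction n rule: int_induct[where k=M])
    case base then show ?case by (rule low) simp
  next
    case (step1 i) then show ?case by (simp add: f)
  next
    case (step2 i) then show ?case by (intro low) simp
  qed
qed

lemma zero_right:
  assumes l: "l2 f" and f: "\<And>n. f (n+1) = \<rho> n * f n" and nz: "\<And>n. \<rho> n \<noteq> 0"
    and b: "\<And>n. n \<ge> M \<Longrightarrow> cmod (\<rho> n) \<ge> 1"
  shows "f n = 0"
proof -
  have high: "f n = 0" if n: "n \<ge> M" for n
  proof -
    have mono: "cmod (f n) \<le> cmod (f (n + int k))" for k
    proof (induction k)
      case 0 then show ?case by simp
    next
      case (Suc k)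
      have "f (n + int (Suc k)) = \<rho> (n + int k) * f (n + int k)"
        using f[of "n + int k"] by (simp add: add_ac)
      hence e: "cmod (f (n + int (Suc k))) = cmod (\<rho> (n + int k)) * cmod (f (n + int k))"
        by (simp add: norm_mult)
      have bb: "cmod (\<rho> (n + int k)) \<ge> 1" by (rule b) (use n in simp)
      have "1 * cmod (f (n + int k)) \<le> cmod (f (n + int (Suc k)))"
        unfolding e by (rule mult_right_mono[OF bb]) simp
      thus ?case using Suc by simp
    qed
    have "(cmod (f n))\<^sup>2 \<le> 0"
      by (rule LIMSEQ_le_const[OF l2_tail_up[OF l, of n]]) (auto intro!: power_mono mono)
    thus ?thesis by simp
  qed
  show ?thesis
  proof (induction n rule: int_induct[where k=M])
    case base then show ?case by (rule high) simp
  next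
    case (step1 i) then show ?case by (intro high) simp
  next
    case (step2 i)
    have "\<rho> (i - 1) * f (i - 1) = 0" using f[of "i - 1"] step2 by simp
    thus ?case using nz[of "i - 1"] by simp
  qed
qed

lemma half_bound:
  fixes f :: "int \<Rightarrow> complex"
  assumes fb: "\<And>k. cmod (f (M + int k)) \<le> C * \<mu> ^ k" and mu: "0 \<le> \<mu>" "\<mu> < 1"
    and G: "finite G" "G \<subseteq> {M..}"
  shows "(\<Sum>n\<in>G. (cmod (f n))\<^sup>2) \<le> C\<^sup>2 / (1 - \<mu>\<^sup>2)"
proof -
  define H where "H = (\<lambda>n. nat (n - M)) ` G"
  have GH: "G = (\<lambda>k. M + int k) ` H" unfolding H_def using G(2)
    by (auto simp: image_iff intro!: bexI[where x="_"])
  have inj: "inj_on (\<lambda>k. M + int k) H" by (auto simp: inj_on_def)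
  have "(\<Sum>n\<in>G. (cmod (f n))\<^sup>2) = (\<Sum>k\<in>H. (cmod (f (M + int k)))\<^sup>2)"
    unfolding GH by (simp add: sum.reindex[OF inj])
  also have "\<dots> \<le> (\<Sum>k\<in>H. C\<^sup>2 * (\<mu>\<^sup>2) ^ k)"
  proof (rule sum_mono)
    fix k
    have "(cmod (f (M + int k)))\<^sup>2 \<le> (C * \<mu> ^ k)\<^sup>2"
      by (rule power_mono[OF fb]) simp
    thus "(cmod (f (M + int k)))\<^sup>2 \<le> C\<^sup>2 * (\<mu>\<^sup>2) ^ k"
      by (simp add: power_mult_distrib power_mult[symmetric] mult.commute)
  qed
  also have "\<dots> \<le> (\<Sum>k. C\<^sup>2 * (\<mu>\<^sup>2) ^ k)"
    by (rule sum_le_suminf) (use mu G H_def in \<open>auto intro!: summable_mult simp: power_less_one_iff abs_square_less_1\<close>)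
  also have "\<dots> = C\<^sup>2 / (1 - \<mu>\<^sup>2)"
    using mu by (simp add: suminf_mult suminf_geometric abs_square_less_1 divide_inverse)
  finally show ?thesis .
qed

lemma l2_geom:
  fixes f :: "int \<Rightarrow> complex"
  assumes up: "\<And>k. cmod (f (M + int k)) \<le> C * \<mu> ^ k" and dn: "\<And>k. cmod (f (- M - int k)) \<le> C * \<mu> ^ k"
    and M: "M \<ge> 0" and mu: "0 \<le> \<mu>" "\<mu> < 1"
  shows "l2 f"
proof -
  define Z where "Z = (\<Sum>n\<in>{-M..<M}. (cmod (f n))\<^sup>2)"
  have "l2 f \<and> nrm f \<le> C\<^sup>2 / (1 - \<mu>\<^sup>2) + C\<^sup>2 / (1 - \<mu>\<^sup>2) + Z"
  proof (rule l2I)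
    fix F :: "int set" assume F: "finite F"
    have split: "F = (F \<inter> {M..}) \<union> (F \<inter> {..<-M}) \<union> (F \<inter> {-M..<M})" by auto
    have "(\<Sum>n\<in>F. (cmod (f n))\<^sup>2) = (\<Sum>n\<in>F \<inter> {M..}. (cmod (f n))\<^sup>2) + (\<Sum>n\<in>F \<inter> {..<-M}. (cmod (f n))\<^sup>2)
         + (\<Sum>n\<in>F \<inter> {-M..<M}. (cmod (f n))\<^sup>2)"
      by (subst split, subst sum.union_disjoint, use F M in auto, subst sum.union_disjoint, use M in auto)
    also have "(\<Sum>n\<in>F \<inter> {M..}. (cmod (f n))\<^sup>2) \<le> C\<^sup>2 / (1 - \<mu>\<^sup>2)"
      by (rule half_bound[OF up mu]) (use F in auto)
    also have "(\<Sum>n\<in>F \<inter> {..<-M}. (cmod (f n))\<^sup>2) \<le> C\<^sup>2 / (1 - \<mu>\<^sup>2)"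
    proof -
      have "(\<Sum>n\<in>F \<inter> {..<-M}. (cmod (f n))\<^sup>2) = (\<Sum>n\<in>uminus ` (F \<inter> {..<-M}). (cmod (f (- n)))\<^sup>2)"
        by (simp add: sum.reindex inj_on_def)
      also have "\<dots> \<le> C\<^sup>2 / (1 - \<mu>\<^sup>2)"
        by (rule half_bound[where f="\<lambda>n. f (-n)" and M=M, OF _ mu]) (use F dn in \<open>auto simp: algebra_simps\<close>)
      finally show ?thesis .
    qed
    also have "(\<Sum>n\<in>F \<inter> {-M..<M}. (cmod (f n))\<^sup>2) \<le> Z"
      unfolding Z_def by (rule sum_mono2) auto
    finally show "(\<Sum>n\<in>F. (cmod (f n))\<^sup>2) \<le> C\<^sup>2 / (1 - \<mu>\<^sup>2) + C\<^sup>2 / (1 - \<mu>\<^sup>2) + Z" by simp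
  qed
  thus ?thesis by simp
qed

lemma ps_l2:
  assumes nz: "\<And>n. \<rho> n \<noteq> 0" and M: "M \<ge> 0"
    and r: "0 \<le> r" "r < 1" "\<And>n. n \<ge> M \<Longrightarrow> cmod (\<rho> n) \<le> r"
    and R: "R > 1" "\<And>n. n \<le> -M \<Longrightarrow> cmod (\<rho> n) \<ge> R"
  shows "l2 (ps \<rho>)"
proof -
  define \<mu> where "\<mu> = max r (1 / R)"
  define C where "C = max (cmod (ps \<rho> M)) (cmod (ps \<rho> (-M)))"
  have mu: "0 \<le> \<mu>" "\<mu> < 1" "r \<le> \<mu>" "1 / R \<le> \<mu>" using r R unfolding \<mu>_def by auto
  have C0: "C \<ge> 0" unfolding C_def by (simp add: le_max_iff_disj)
  have up: "cmod (ps \<rho> (M + int k)) \<le> C * \<mu> ^ k" for k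
    proof (induction k)
      case 0 then show ?case unfolding C_def by simp
    next
      case (Suc k)
      have "cmod (ps \<rho> (M + int (Suc k))) = cmod (\<rho> (M + int k)) * cmod (ps \<rho> (M + int k))"
        using ps_step[where \<rho>=\<rho> and n="M + int k", OF nz] by (simp add: add_ac norm_mult)
      also have "\<dots> \<le> \<mu> * (C * \<mu> ^ k)"
        by (rule mult_mono) (use r(3)[of "M + int k"] mu Suc in auto)
      finally show ?case by (simp add: mult_ac)
    qed
  have dn: "cmod (ps \<rho> (- M - int k)) \<le> C * \<mu> ^ k" for k
    proof (induction k)
      case 0 then show ?case unfolding C_def by simp
    next
      case (Suc k)
      have e: "ps \<rho> (- M - int k) = \<rho> (- M - int (Suc k)) * ps \<rho> (- M - int (Suc k))"
        using ps_step[where \<rho>=\<rho> and n="- M - int (Suc k)", OF nz] by simp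
      have Rb: "cmod (\<rho> (- M - int (Suc k))) \<ge> R" by (rule R(2)) simp
      have "cmod (ps \<rho> (- M - int (Suc k))) = cmod (ps \<rho> (- M - int k)) / cmod (\<rho> (- M - int (Suc k)))"
        using nz[of "- M - int (Suc k)"] unfolding e by (simp add: norm_mult)
      also have "\<dots> \<le> cmod (ps \<rho> (- M - int k)) / R"
        by (rule divide_left_mono) (use Rb R nz[of "- M - int (Suc k)"] in auto)
      also have "\<dots> = cmod (ps \<rho> (- M - int k)) * (1 / R)" by simp
      also have "\<dots> \<le> (C * \<mu> ^ k) * \<mu>"
        by (rule mult_mono) (use Suc mu C0 R in auto)
      finally show ?case by (simp add: mult_ac)
    qed
  show ?thesis by (rule l2_geom[OF up dn M mu(1,2)])
qed

lemma fin_range: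
  fixes f :: "int \<Rightarrow> 'a"
  assumes "\<And>n. n \<ge> K \<Longrightarrow> f n = x" "\<And>n. n \<le> -K \<Longrightarrow> f n = y"
  shows "finite (range f)"
proof (rule finite_subset[of _ "f ` {-K..K} \<union> {x, y}"])
  show "range f \<subseteq> f ` {-K..K} \<union> {x, y}"
  proof
    fix z assume "z \<in> range f"
    then obtain n where n: "z = f n" by auto
    show "z \<in> f ` {-K..K} \<union> {x, y}"
    proof (cases "n \<ge> K \<or> n \<le> -K")
      case True then show ?thesis using assms n by auto
    next
      case False then show ?thesis using n by auto
    qed
  qed
qed auto

lemma fin_pos_lb:
  fixes f :: "int \<Rightarrow> real"
  assumes "finite (range f)" "\<And>n. f n > 0"
  shows "\<exists>m>0. \<forall>n. m \<le> f n"
proof (intro exI[of _ "Min (range f)"] conjI allI)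
  show "0 < Min (range f)" using assms by (subst Min_gr_iff) auto
  fix n show "Min (range f) \<le> f n" using assms by (intro Min_le) auto
qed

lemma fin_ub:
  fixes f :: "int \<Rightarrow> real"
  assumes "finite (range f)"
  shows "\<exists>B. \<forall>n. f n \<le> B"
  using assms by (intro exI[of _ "Max (range f)"] allI Max_ge) auto

definition proot :: "real \<Rightarrow> real \<Rightarrow> real" where
  "proot p q = (p + sqrt (p\<^sup>2 + 4 * q)) / 2"

lemma proot:
  assumes "p > 0" "q > 0"
  shows "proot p q > 0" "(proot p q)\<^sup>2 = p * proot p q + q"
proof -
  have s: "(sqrt (p\<^sup>2 + 4 * q))\<^sup>2 = p\<^sup>2 + 4 * q" using assms by simp
  show "proot p q > 0" unfolding proot_def using assms by (simp add: add_pos_nonneg)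
  show "(proot p q)\<^sup>2 = p * proot p q + q"
    unfolding proot_def using s by (simp add: power2_eq_square field_simps)
qed

lemma root_gt_q:
  fixes z p q :: real
  assumes "z > 0" "p > 0" "q > 0" "z\<^sup>2 = p * z + q" "q < p + 1"
  shows "q < z"
proof (rule ccontr)
  assume "\<not> q < z" hence zq: "z \<le> q" by simp
  have qz: "q = z * (z - p)" using assms(4) by (simp add: power2_eq_square algebra_simps)
  also have "\<dots> \<le> q * (z - p)"
  proof (cases "z - p \<ge> 0")
    case True then show ?thesis using zq by (simp add: mult_right_mono)
  next
    case False
    hence "z * (z - p) < 0" using assms(1) by (simp add: mult_pos_neg)
    then show ?thesis using qz assms(3) by linarith
  qed
  finally have "q * 1 \<le> q * (z - p)" by simp
  hence "1 \<le> z - p" using assms(3) by (simp add: mult_le_cancel_left_pos)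
  thus False using zq assms by linarith
qed

lemma root_gt1:
  fixes z p q :: real
  assumes "z > 0" "p > 0" "q > 0" "z\<^sup>2 = p * z + q" "p + q > 1"
  shows "z > 1"
proof (rule ccontr)
  assume "\<not> z > 1" hence z1: "z \<le> 1" by simp
  have "z\<^sup>2 \<le> z" using z1 assms(1) by (simp add: power2_eq_square mult_left_le_one_le)
  hence "p * z + q \<le> z" using assms(4) by simp
  hence "q \<le> z * (1 - p)" by (simp add: algebra_simps)
  moreover have "z * (1 - p) \<le> max 0 (1 - p)"
  proof (cases "1 - p \<ge> 0")
    case True then show ?thesis using z1 assms(1) mult_left_le_one_le[of "1-p" z] by (simp add: max_def)
  next
    case False then show ?thesis using assms(1) mult_nonneg_nonpos[of z "1-p"] by (simp add: max_def)
  qed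
  ultimately show False using assms by (auto simp: max_def split: if_splits)
qed

lemma root_lt1:
  fixes z p q :: real
  assumes "z > 0" "p > 0" "q > 0" "z\<^sup>2 = p * z + q" "p + q < 1"
  shows "z < 1"
proof (rule ccontr)
  assume "\<not> z < 1" hence z1: "z \<ge> 1" by simp
  have "z \<le> z\<^sup>2" using z1 by (simp add: power2_eq_square)
  hence "z \<le> p * z + q" using assms(4) by simp
  also have "\<dots> \<le> p * z + q * z" using z1 assms by simp
  finally have "z * 1 \<le> z * (p + q)" by (simp add: algebra_simps)
  hence "1 \<le> p + q" using assms(1) by (simp add: mult_le_cancel_left_pos)
  thus False using assms by simp
qed

lemma bulk_pq:
  fixes b e :: real
  assumes "b > 0" "e > 0"
  shows "e / (2 * b) < e * e / (2 * b * b) + 1"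
    and "e > b \<Longrightarrow> e * e / (2 * b * b) + e / (2 * b) > 1"
    and "e < b \<Longrightarrow> e * e / (2 * b * b) + e / (2 * b) < 1"
proof -
  define t where "t = e / b"
  have p: "e * e / (2 * b * b) = t * t / 2" and q: "e / (2 * b) = t / 2" unfolding t_def using assms by auto
  have t0: "t > 0" unfolding t_def using assms by simp
  show "e / (2 * b) < e * e / (2 * b * b) + 1" unfolding p q
    using zero_le_power2[of "t - 1/2"] by (simp add: power2_eq_square algebra_simps)
  show "e > b \<Longrightarrow> e * e / (2 * b * b) + e / (2 * b) > 1"
  proof -
    assume "e > b" hence "t > 1" unfolding t_def using assms by simp
    hence "t * t > 1 * 1" using mult_strict_mono[of 1 t 1 t] by simp
    thus ?thesis unfolding p q using \<open>t > 1\<close> by simp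
  qed
  show "e < b \<Longrightarrow> e * e / (2 * b * b) + e / (2 * b) < 1"
  proof -
    assume "e < b" hence "t < 1" unfolding t_def using assms by simp
    hence "t * t < 1 * 1" using t0 by (intro mult_strict_mono) auto
    thus ?thesis unfolding p q using \<open>t < 1\<close> by simp
  qed
qed

locale chain =
  fixes b c d :: "int \<Rightarrow> real" and bL eL bR eR :: real and N :: int
  assumes bpos: "\<And>n. b n > 0" and cpos: "\<And>n. c n > 0" and dpos: "\<And>n. d n > 0"
    and N0: "N \<ge> 0"
    and left: "\<And>n. n \<le> -N \<Longrightarrow> b n = bL \<and> c n = eL \<and> d n = eL"
    and right: "\<And>n. n \<ge> N \<Longrightarrow> b n = bR \<and> c n = eR \<and> d n = eR"
begin

lemma bL: "bL > 0" and eL: "eL > 0" and bR: "bR > 0" and eR: "eR > 0"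
  using left[of "-N"] right[of N] bpos[of N] cpos[of N] bpos[of "-N"] cpos[of "-N"] by auto

definition pp :: "int \<Rightarrow> real" where "pp n = c n * d n / (2 * b n * b (n+2))"
definition qq :: "int \<Rightarrow> real" where "qq n = d n / (2 * b (n+2))"

definition pL where "pL = eL * eL / (2 * bL * bL)"
definition qL where "qL = eL / (2 * bL)"
definition pR where "pR = eR * eR / (2 * bR * bR)"
definition qR where "qR = eR / (2 * bR)"

lemma pp_pos: "pp n > 0" unfolding pp_def using bpos cpos dpos by simp
lemma qq_pos: "qq n > 0" unfolding qq_def using bpos dpos by simp
lemma pL_pos: "pL > 0" and qL_pos: "qL > 0" and pR_pos: "pR > 0" and qR_pos: "qR > 0"
  unfolding pL_def qL_def pR_def qR_def using bL eL bR eR by auto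

lemma pq_left: "n \<le> -N-2 \<Longrightarrow> pp n = pL \<and> qq n = qL"
  unfolding pp_def qq_def pL_def qL_def using left[of n] left[of "n+2"] by auto
lemma pq_right: "n \<ge> N \<Longrightarrow> pp n = pR \<and> qq n = qR"
  unfolding pp_def qq_def pR_def qR_def using right[of n] right[of "n+2"] by auto

definition zL where "zL = proot pL qL"
definition zR where "zR = proot pR qR"

lemma zL: "zL > 0" "zL\<^sup>2 = pL * zL + qL" and zR: "zR > 0" "zR\<^sup>2 = pR * zR + qR"
  unfolding zL_def zR_def using proot pL_pos qL_pos pR_pos qR_pos by auto

lemma qL_zL: "qL < zL"
  by (rule root_gt_q[OF zL(1) pL_pos qL_pos zL(2)]) (unfold pL_def qL_def, rule bulk_pq(1)[OF bL eL])
lemma qR_zR: "qR < zR"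
  by (rule root_gt_q[OF zR(1) pR_pos qR_pos zR(2)]) (unfold pR_def qR_def, rule bulk_pq(1)[OF bR eR])

lemma zL_gt1: "eL > bL \<Longrightarrow> zL > 1"
  by (rule root_gt1[OF zL(1) pL_pos qL_pos zL(2)]) (unfold pL_def qL_def, rule bulk_pq(2)[OF bL eL])
lemma zL_lt1: "eL < bL \<Longrightarrow> zL < 1"
  by (rule root_lt1[OF zL(1) pL_pos qL_pos zL(2)]) (unfold pL_def qL_def, rule bulk_pq(3)[OF bL eL])
lemma zR_gt1: "eR > bR \<Longrightarrow> zR > 1"
  by (rule root_gt1[OF zR(1) pR_pos qR_pos zR(2)]) (unfold pR_def qR_def, rule bulk_pq(2)[OF bR eR])
lemma zR_lt1: "eR < bR \<Longrightarrow> zR < 1"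
  by (rule root_lt1[OF zR(1) pR_pos qR_pos zR(2)]) (unfold pR_def qR_def, rule bulk_pq(3)[OF bR eR])

lemma zL_fix: "zL = pL + qL / zL"
  using zL by (simp add: field_simps power2_eq_square)
lemma zR_fix: "zR = pR + qR / zR"
  using zR by (simp add: field_simps power2_eq_square)

primrec Ar :: "nat \<Rightarrow> real" where
  "Ar 0 = zL"
| "Ar (Suc k) = pp (int k - N - 2) + qq (int k - N - 2) / Ar k"

definition ar :: "int \<Rightarrow> real" where
  "ar n = (if n \<le> -N-2 then zL else Ar (nat (n + N + 2)))"

lemma Ar_pos: "Ar k > 0"
  by (induction k) (auto simp: zL pp_pos qq_pos add_pos_pos)

lemma ar_pos: "ar n > 0"
  unfolding ar_def using Ar_pos zL by auto

lemma ar_step: "ar (n+1) = pp n + qq n / ar n"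
proof (cases "n + 1 \<le> -N-2")
  case True
  then show ?thesis unfolding ar_def using pq_left[of n] zL_fix by auto
next
  case False
  hence e: "nat (n + 1 + N + 2) = Suc (nat (n + N + 2))" by auto
  have "ar n = Ar (nat (n + N + 2))" unfolding ar_def using False by auto
  thus ?thesis unfolding ar_def using False e by (simp add: algebra_simps)
qed

lemma ar_left: "n \<le> -N-2 \<Longrightarrow> ar n = zL"
  unfolding ar_def by simp

lemma pp_lb: "\<exists>m>0. \<forall>n. m \<le> pp n"
  by (rule fin_pos_lb[OF fin_range[where K="N+2" and x=pR and y=pL]]) (use pq_left pq_right pp_pos in auto)
lemma qq_ub: "\<exists>B. \<forall>n. qq n \<le> B"
  by (rule fin_ub[OF fin_range[where K="N+2" and x=qR and y=qL]]) (use pq_left pq_right in auto)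
lemma pp_ub: "\<exists>B. \<forall>n. pp n \<le> B"
  by (rule fin_ub[OF fin_range[where K="N+2" and x=pR and y=pL]]) (use pq_left pq_right in auto)

lemma ar_lb: "\<exists>m>0. \<forall>n. m \<le> ar n"
proof -
  obtain m where m: "m > 0" "\<And>n. m \<le> pp n" using pp_lb by auto
  have "min m zL \<le> ar n" for n
  proof (cases "n \<le> -N-2")
    case True then show ?thesis using ar_left by simp
  next
    case False
    have "ar n = pp (n - 1) + qq (n - 1) / ar (n - 1)" using ar_step[of "n-1"] by simp
    also have "\<dots> \<ge> pp (n - 1)" using qq_pos ar_pos by (simp add: less_eq_real_def)
    finally show ?thesis using m(2)[of "n-1"] by linarith
  qed
  thus ?thesis using m zL by (intro exI[of _ "min m zL"]) auto
qed

lemma ar_ub: "\<exists>B. \<forall>n. ar n \<le> B"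
proof -
  obtain m where m: "m > 0" "\<And>n. m \<le> ar n" using ar_lb by auto
  obtain P where P: "\<And>n. pp n \<le> P" using pp_ub by auto
  obtain Q where Q: "\<And>n. qq n \<le> Q" using qq_ub by auto
  have "ar n \<le> max zL (P + Q / m)" for n
  proof (cases "n \<le> -N-2")
    case True then show ?thesis using ar_left by simp
  next
    case False
    have "ar n = pp (n - 1) + qq (n - 1) / ar (n - 1)" using ar_step[of "n-1"] by simp
    also have "qq (n - 1) / ar (n - 1) \<le> Q / m"
      by (rule frac_le) (use Q[of "n-1"] m qq_pos[of "n-1"] in \<open>auto intro: order_trans[OF _ Q]\<close>)
    finally show ?thesis using P[of "n-1"] by linarith
  qed
  thus ?thesis by blast
qed

lemma two_step:
  assumes "n \<ge> N"
  shows "\<bar>ar (n+2) - zR\<bar> \<le> (qR / zR\<^sup>2) * \<bar>ar n - zR\<bar>"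
proof -
  have a1: "ar (n+1) = pR + qR / ar n" using ar_step[of n] pq_right[of n] assms by simp
  have a2: "ar (n+2) = pR + qR / ar (n+1)" using ar_step[of "n+1"] pq_right[of "n+1"] assms by (simp add: add.assoc)
  have p0: "ar n > 0" "ar (n+1) > 0" using ar_pos by auto
  have "ar (n+2) - zR = qR / ar (n+1) - qR / zR" using a2 zR_fix by simp
  also have "\<dots> = qR * (zR - ar (n+1)) / (ar (n+1) * zR)" using p0 zR by (simp add: field_simps)
  also have "zR - ar (n+1) = qR * (ar n - zR) / (ar n * zR)"
  proof -
    have "zR - ar (n+1) = qR / zR - qR / ar n" using a1 zR_fix by linarith
    also have "\<dots> = qR * (ar n - zR) / (ar n * zR)" using p0 zR by (simp add: field_simps)
    finally show ?thesis .
  qed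
  finally have e: "ar (n+2) - zR = qR\<^sup>2 * (ar n - zR) / ((ar n * ar (n+1)) * zR\<^sup>2)"
    using p0 zR(1) by (simp add: field_simps power2_eq_square)
  have prod: "ar n * ar (n+1) = pR * ar n + qR" using a1 p0 by (simp add: field_simps)
  have big: "ar n * ar (n+1) \<ge> qR" using prod pR_pos p0 by simp
  have "\<bar>ar (n+2) - zR\<bar> = qR\<^sup>2 * \<bar>ar n - zR\<bar> / ((ar n * ar (n+1)) * zR\<^sup>2)"
    unfolding e using p0 zR(1) qR_pos by (simp add: abs_mult abs_divide)
  also have "\<dots> \<le> qR\<^sup>2 * \<bar>ar n - zR\<bar> / (qR * zR\<^sup>2)"
  proof (rule divide_left_mono)
    have z2: "zR\<^sup>2 > 0" using zR(1) by simp
    show "qR * zR\<^sup>2 \<le> ar n * ar (n + 1) * zR\<^sup>2" by (rule mult_right_mono[OF big]) simp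
    show "0 \<le> qR\<^sup>2 * \<bar>ar n - zR\<bar>" by simp
    show "0 < ar n * ar (n + 1) * zR\<^sup>2 * (qR * zR\<^sup>2)" using z2 p0 qR_pos by simp
  qed
  also have "\<dots> = (qR / zR\<^sup>2) * \<bar>ar n - zR\<bar>" using qR_pos zR(1) by (simp add: power2_eq_square field_simps)
  finally show ?thesis .
qed

lemma ar_conv: "\<epsilon> > 0 \<Longrightarrow> \<exists>M. \<forall>n\<ge>M. \<bar>ar n - zR\<bar> \<le> \<epsilon>"
proof -
  assume eps: "\<epsilon> > 0"
  define \<kappa> where "\<kappa> = qR / zR\<^sup>2"
  have k0: "0 \<le> \<kappa>" and k1: "\<kappa> < 1"
  proof -
    show "0 \<le> \<kappa>" unfolding \<kappa>_def using qR_pos by simp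
    have "qR < zR\<^sup>2" using zR pR_pos by simp
    thus "\<kappa> < 1" unfolding \<kappa>_def using qR_pos by (auto simp: divide_less_eq_1)
  qed
  define E where "E = max \<bar>ar N - zR\<bar> \<bar>ar (N+1) - zR\<bar>"
  have geo: "\<bar>ar (N + int i + 2 * int k) - zR\<bar> \<le> \<kappa> ^ k * E" if "i \<le> 1" for i k
  proof (induction k)
    case 0 then show ?case unfolding E_def using that by (cases i) auto
  next
    case (Suc k)
    have "\<bar>ar (N + int i + 2 * int k + 2) - zR\<bar> \<le> \<kappa> * \<bar>ar (N + int i + 2 * int k) - zR\<bar>"
      unfolding \<kappa>_def by (rule two_step) simp
    also have "\<dots> \<le> \<kappa> * (\<kappa> ^ k * E)" by (rule mult_left_mono[OF Suc k0])
    finally show ?case by (simp add: algebra_simps)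
  qed
  have E0: "E \<ge> 0" unfolding E_def by simp
  obtain j where j: "\<kappa> ^ j * E < \<epsilon>"
  proof (cases "E = 0")
    case True then show ?thesis using that[of 0] eps by simp
  next
    case False
    hence Ep: "E > 0" using E0 by simp
    obtain j where "\<kappa> ^ j < \<epsilon> / E" using real_arch_pow_inv[of "\<epsilon> / E" \<kappa>] k1 eps Ep by auto
    thus ?thesis using Ep that[of j] by (simp add: field_simps)
  qed
  show ?thesis
  proof (intro exI[of _ "N + 2 * int j"] allI impI)
    fix n assume n: "n \<ge> N + 2 * int j"
    define m where "m = nat (n - N)"
    define i where "i = m mod 2"
    define k where "k = m div 2"
    have mik: "m = i + 2 * k" unfolding i_def k_def by simp
    have "int m = n - N" unfolding m_def using n by simp
    hence nk: "n = N + int i + 2 * int k" using mik by simp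
    have i1: "i \<le> 1" unfolding i_def by simp
    have "2 * int j \<le> 2 * int k" using nk n i1 by simp
    hence jk: "j \<le> k" by simp
    have "\<bar>ar n - zR\<bar> \<le> \<kappa> ^ k * E" unfolding nk by (rule geo[OF i1])
    also have "\<dots> \<le> \<kappa> ^ j * E" by (rule mult_right_mono[OF power_decreasing[OF jk k0] E0]) (use k1 in simp)
    finally show "\<bar>ar n - zR\<bar> \<le> \<epsilon>" using j by simp
  qed
qed

end

definition fb :: "('a \<Rightarrow> bool) \<Rightarrow> ('a \<Rightarrow> real) \<Rightarrow> ('a \<Rightarrow> int \<Rightarrow> complex) \<Rightarrow> bool" where
  "fb P t \<Phi> \<longleftrightarrow> (\<forall>x. P x \<longrightarrow> l2 (\<Phi> x)) \<and> (\<exists>K. \<forall>x. P x \<longrightarrow> nrm (\<Phi> x) \<le> K * t x)"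

lemma fbI: "(\<And>x. P x \<Longrightarrow> l2 (\<Phi> x) \<and> nrm (\<Phi> x) \<le> K * t x) \<Longrightarrow> fb P t \<Phi>"
  unfolding fb_def by blast

lemma fb_l2: "fb P t \<Phi> \<Longrightarrow> P x \<Longrightarrow> l2 (\<Phi> x)"
  unfolding fb_def by blast

lemma fb_K: "fb P t \<Phi> \<Longrightarrow> (\<And>x. P x \<Longrightarrow> t x \<ge> 0) \<Longrightarrow> \<exists>K\<ge>0. \<forall>x. P x \<longrightarrow> nrm (\<Phi> x) \<le> K * t x"
proof -
  assume fb: "fb P t \<Phi>" and t: "\<And>x. P x \<Longrightarrow> t x \<ge> 0"
  then obtain K where K: "\<And>x. P x \<Longrightarrow> nrm (\<Phi> x) \<le> K * t x" unfolding fb_def by blast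
  have "nrm (\<Phi> x) \<le> max K 0 * t x" if "P x" for x
    using K[OF that] mult_right_mono[of K "max K 0" "t x"] t[OF that] by simp
  thus ?thesis by (intro exI[of _ "max K 0"]) auto
qed

lemma fb_add:
  assumes "fb P t f" "fb P t g" "\<And>x. P x \<Longrightarrow> t x \<ge> 0"
  shows "fb P t (\<lambda>x n. f x n + g x n)"
proof -
  obtain A where A: "A \<ge> 0" "\<And>x. P x \<Longrightarrow> nrm (f x) \<le> A * t x" using fb_K[OF assms(1,3)] by auto
  obtain B where B: "B \<ge> 0" "\<And>x. P x \<Longrightarrow> nrm (g x) \<le> B * t x" using fb_K[OF assms(2,3)] by auto
  show ?thesis
  proof (rule fbI[where K="2 * A + 2 * B"])
    fix x assume x: "P x"
    have h: "l2 (\<lambda>n. f x n + g x n) \<and> nrm (\<lambda>n. f x n + g x n) \<le> 2 * nrm (f x) + 2 * nrm (g x)"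
      by (rule l2_add[OF fb_l2[OF assms(1) x] fb_l2[OF assms(2) x]])
    thus "l2 (\<lambda>n. f x n + g x n) \<and> nrm (\<lambda>n. f x n + g x n) \<le> (2 * A + 2 * B) * t x"
      using A(2)[OF x] B(2)[OF x] by (simp add: algebra_simps)
  qed
qed

lemma fb_mult:
  assumes "fb P t f" "\<And>n. cmod (m n) \<le> B" "\<And>x. P x \<Longrightarrow> t x \<ge> 0"
  shows "fb P t (\<lambda>x n. m n * f x n)"
proof -
  obtain A where A: "A \<ge> 0" "\<And>x. P x \<Longrightarrow> nrm (f x) \<le> A * t x" using fb_K[OF assms(1,3)] by auto
  show ?thesis
  proof (rule fbI[where K="B\<^sup>2 * A"])
    fix x assume x: "P x"
    have h: "l2 (\<lambda>n. m n * f x n) \<and> nrm (\<lambda>n. m n * f x n) \<le> B\<^sup>2 * nrm (f x)"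
      by (rule l2_mult[OF assms(2) fb_l2[OF assms(1) x]])
    moreover have "B\<^sup>2 * nrm (f x) \<le> B\<^sup>2 * (A * t x)" using A(2)[OF x] by (simp add: mult_left_mono)
    ultimately show "l2 (\<lambda>n. m n * f x n) \<and> nrm (\<lambda>n. m n * f x n) \<le> B\<^sup>2 * A * t x"
      by (simp add: mult.assoc)
  qed
qed

lemma fb_cmult:
  assumes "fb P t f" "\<And>x. P x \<Longrightarrow> t x \<ge> 0"
  shows "fb P t (\<lambda>x n. a * f x n)"
  using fb_mult[OF assms(1), of "\<lambda>n. a" "cmod a"] assms(2) by simp

lemma fb_shift:
  assumes "fb P t f" "\<And>x. P x \<Longrightarrow> t x \<ge> 0"
  shows "fb P t (\<lambda>x n. f x (n + k))"
proof -
  obtain A where A: "A \<ge> 0" "\<And>x. P x \<Longrightarrow> nrm (f x) \<le> A * t x" using fb_K[OF assms] by auto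
  show ?thesis
  proof (rule fbI[where K=A])
    fix x assume x: "P x"
    show "l2 (\<lambda>n. f x (n + k)) \<and> nrm (\<lambda>n. f x (n + k)) \<le> A * t x"
      using l2_shift[OF fb_l2[OF assms(1) x], of k] A(2)[OF x] by auto
  qed
qed

lemma fb_sol:
  assumes S: "\<forall>u. l2 u \<longrightarrow> (\<exists>D. l2 D \<and> nrm D \<le> K * nrm u \<and> R u D)"
    and f: "fb P t f" and t: "\<And>x. P x \<Longrightarrow> t x \<ge> 0"
  shows "fb P t (\<lambda>x. SOME D. l2 D \<and> nrm D \<le> K * nrm (f x) \<and> R (f x) D)"
    and "P x \<Longrightarrow> R (f x) (SOME D. l2 D \<and> nrm D \<le> K * nrm (f x) \<and> R (f x) D)"
proof -
  obtain A where A: "A \<ge> 0" "\<And>x. P x \<Longrightarrow> nrm (f x) \<le> A * t x" using fb_K[OF f t] by auto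
  have sx: "l2 (SOME D. l2 D \<and> nrm D \<le> K * nrm (f x) \<and> R (f x) D) \<and>
            nrm (SOME D. l2 D \<and> nrm D \<le> K * nrm (f x) \<and> R (f x) D) \<le> K * nrm (f x) \<and>
            R (f x) (SOME D. l2 D \<and> nrm D \<le> K * nrm (f x) \<and> R (f x) D)" if "P x" for x
    by (rule someI_ex[OF S[rule_format, OF fb_l2[OF f that]]])
  show "P x \<Longrightarrow> R (f x) (SOME D. l2 D \<and> nrm D \<le> K * nrm (f x) \<and> R (f x) D)" using sx by blast
  show "fb P t (\<lambda>x. SOME D. l2 D \<and> nrm D \<le> K * nrm (f x) \<and> R (f x) D)"
  proof (rule fbI[where K="max K 0 * A"])
    fix x assume x: "P x"
    have "K * nrm (f x) \<le> max K 0 * nrm (f x)" by (rule mult_right_mono) (auto simp: nrm_nonneg)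
    also have "\<dots> \<le> max K 0 * (A * t x)" by (rule mult_left_mono[OF A(2)[OF x]]) simp
    finally show "l2 (SOME D. l2 D \<and> nrm D \<le> K * nrm (f x) \<and> R (f x) D) \<and>
        nrm (SOME D. l2 D \<and> nrm D \<le> K * nrm (f x) \<and> R (f x) D) \<le> max K 0 * A * t x"
      using sx[OF x] by (simp add: mult.assoc)
  qed
qed

lemma ev_abs:
  fixes P :: "int \<Rightarrow> bool"
  assumes "\<And>n. n \<ge> Ma \<Longrightarrow> P n" "\<And>n. n \<le> -Mb \<Longrightarrow> P n"
  shows "\<And>n. \<bar>n\<bar> \<ge> max (max Ma Mb) 0 \<Longrightarrow> P n"
proof -
  fix n :: int assume n: "\<bar>n\<bar> \<ge> max (max Ma Mb) 0"
  show "P n"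
  proof (cases "n \<ge> 0")
    case True then show ?thesis using n assms(1)[of n] by simp
  next
    case False then show ?thesis using n assms(2)[of n] by simp
  qed
qed

context chain begin

lemma b_lb: "\<exists>m>0. \<forall>n. m \<le> b n"
  by (rule fin_pos_lb[OF fin_range[where K=N and x=bR and y=bL]]) (use left right bpos in auto)
lemma c_lb: "\<exists>m>0. \<forall>n. m \<le> c n"
  by (rule fin_pos_lb[OF fin_range[where K=N and x=eR and y=eL]]) (use left right cpos in auto)
lemma d_lb: "\<exists>m>0. \<forall>n. m \<le> d n"
  by (rule fin_pos_lb[OF fin_range[where K=N and x=eR and y=eL]]) (use left right dpos in auto)
lemma b_ub: "\<exists>B. \<forall>n. b n \<le> B"
  by (rule fin_ub[OF fin_range[where K=N and x=bR and y=bL]]) (use left right in auto)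
lemma c_ub: "\<exists>B. \<forall>n. c n \<le> B"
  by (rule fin_ub[OF fin_range[where K=N and x=eR and y=eL]]) (use left right in auto)
lemma d_ub: "\<exists>B. \<forall>n. d n \<le> B"
  by (rule fin_ub[OF fin_range[where K=N and x=eR and y=eL]]) (use left right in auto)

lemma solve_m:
  "\<exists>K. \<forall>u. l2 u \<longrightarrow> (\<exists>D. l2 D \<and> nrm D \<le> K * nrm u \<and>
      (\<forall>n. D (n+1) = complex_of_real (- qq n / ar n) * D n + u n))"
proof -
  obtain am where am: "am > 0" "\<And>n. am \<le> ar n" using ar_lb by auto
  obtain Q where Q: "\<And>n. qq n \<le> Q" using qq_ub by auto
  have nr: "cmod (complex_of_real (- qq n / ar n)) = qq n / ar n" for n
    using qq_pos[of n] ar_pos[of n] by (simp add: norm_divide)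
  have B: "cmod (complex_of_real (- qq n / ar n)) \<le> Q / am" for n
    unfolding nr by (rule frac_le) (use Q[of n] qq_pos[of n] am in auto)
  define \<epsilon> where "\<epsilon> = (zR - qR) / 2"
  have e0: "\<epsilon> > 0" unfolding \<epsilon>_def using qR_zR by (simp add: norm_divide)
  obtain M1 where M1: "\<And>n. n \<ge> M1 \<Longrightarrow> \<bar>ar n - zR\<bar> \<le> \<epsilon>" using ar_conv[OF e0] by auto
  define r where "r = max (qL / zL) (2 * qR / (zR + qR))"
  have r1: "r < 1" unfolding r_def using qL_zL qR_zR zL zR qR_pos by (auto simp: field_simps)
  have rt: "cmod (complex_of_real (- qq n / ar n)) \<le> r" if n: "n \<ge> max M1 N" for n
  proof -
    have "ar n \<ge> zR - \<epsilon>" using M1[of n] n by (auto simp: abs_le_iff)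
    hence "ar n \<ge> (zR + qR) / 2" by (simp add: \<epsilon>_def field_simps)
    hence "qR / ar n \<le> qR / ((zR + qR) / 2)" by (intro divide_left_mono) (use qR_pos zR in auto)
    also have "\<dots> = 2 * qR / (zR + qR)" by (simp add: norm_divide)
    finally show ?thesis unfolding nr r_def using pq_right[of n] n by auto
  qed
  have lt: "cmod (complex_of_real (- qq n / ar n)) \<le> r" if n: "n \<le> - (N + 2)" for n
    unfolding nr r_def using pq_left[of n] ar_left[of n] n by auto
  show ?thesis
    by (rule solve_fwd[where \<rho>="\<lambda>n. complex_of_real (- qq n / ar n)", OF B r1 ev_abs[where P="\<lambda>n. cmod (complex_of_real (- qq n / ar n)) \<le> r" and Ma="max M1 N" and Mb="N+2", OF rt lt]])
qed

lemma solve_a: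
  assumes cond: "(eL > bL \<and> eR > bR) \<or> (eL < bL \<and> eR < bR)"
  shows "\<exists>K. \<forall>u. l2 u \<longrightarrow> (\<exists>S. l2 S \<and> nrm S \<le> K * nrm u \<and>
      (\<forall>n. S (n+1) = complex_of_real (ar n) * S n + u n))"
proof -
  obtain am where am: "am > 0" "\<And>n. am \<le> ar n" using ar_lb by auto
  obtain AM where AM: "\<And>n. ar n \<le> AM" using ar_ub by auto
  show ?thesis
  proof (cases "eL > bL \<and> eR > bR")
    case True
    have zL1: "zL > 1" and zR1: "zR > 1" using zL_gt1 zR_gt1 True by auto
    have nr: "cmod (complex_of_real (1 / ar n)) = 1 / ar n" for n using ar_pos[of n] by (simp add: norm_divide)
    have B: "cmod (complex_of_real (1 / ar n)) \<le> 1 / am" for n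
      unfolding nr by (rule divide_left_mono) (use am ar_pos[of n] in auto)
    define \<epsilon> where "\<epsilon> = (zR - 1) / 2"
    have e0: "\<epsilon> > 0" unfolding \<epsilon>_def using zR1 by (simp add: norm_divide)
    obtain M1 where M1: "\<And>n. n \<ge> M1 \<Longrightarrow> \<bar>ar n - zR\<bar> \<le> \<epsilon>" using ar_conv[OF e0] by auto
    define r where "r = max (1 / zL) (2 / (zR + 1))"
    have r1: "r < 1" unfolding r_def using zL1 zR1 by (auto simp: field_simps)
    have rt: "cmod (complex_of_real (1 / ar n)) \<le> r" if n: "n \<ge> M1" for n
    proof -
      have "ar n \<ge> zR - \<epsilon>" using M1[of n] n by (auto simp: abs_le_iff)
      hence "ar n \<ge> (zR + 1) / 2" by (simp add: \<epsilon>_def field_simps)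
      hence "1 / ar n \<le> 1 / ((zR + 1) / 2)" by (intro divide_left_mono) (use zR1 in auto)
      thus ?thesis unfolding nr r_def by auto
    qed
    have lt: "cmod (complex_of_real (1 / ar n)) \<le> r" if n: "n \<le> - (N + 2)" for n
      unfolding nr r_def using ar_left[of n] n by auto
    obtain K where K: "\<forall>u. l2 u \<longrightarrow> (\<exists>D. l2 D \<and> nrm D \<le> K * nrm u \<and>
        (\<forall>n. D n = complex_of_real (1 / ar n) * D (n+1) + u n))"
      using solve_bwd[where \<rho>="\<lambda>n. complex_of_real (1 / ar n)", OF B r1 ev_abs[where P="\<lambda>n. cmod (complex_of_real (1 / ar n)) \<le> r" and Ma="M1" and Mb="N+2", OF rt lt]] by blast
    show ?thesis
    proof (rule exI[of _ "max K 0 * (1 / am)\<^sup>2"], intro allI impI)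
      fix u assume u: "l2 u"
      define u' where "u' n = complex_of_real (- 1 / ar n) * u n" for n
      have u'l: "l2 u' \<and> nrm u' \<le> (1 / am)\<^sup>2 * nrm u" unfolding u'_def
      proof (rule l2_mult[OF _ u])
        fix n show "cmod (complex_of_real (- 1 / ar n)) \<le> 1 / am"
          using B[of n] ar_pos[of n] by (simp add: norm_divide)
      qed
      obtain D where D: "l2 D" "nrm D \<le> K * nrm u'" "\<And>n. D n = complex_of_real (1 / ar n) * D (n+1) + u' n"
        using K u'l by blast
      have "K * nrm u' \<le> max K 0 * nrm u'" by (rule mult_right_mono) (auto simp: nrm_nonneg)
      also have "\<dots> \<le> max K 0 * ((1 / am)\<^sup>2 * nrm u)" using u'l by (intro mult_left_mono) auto
      finally have nD: "nrm D \<le> max K 0 * (1 / am)\<^sup>2 * nrm u" using D(2) by (simp add: mult.assoc)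
      have "D (n+1) = complex_of_real (ar n) * D n + u n" for n
      proof -
        have a0: "complex_of_real (ar n) \<noteq> 0" using ar_pos[of n] by (simp add: norm_divide)
        have "complex_of_real (ar n) * D n = complex_of_real (ar n) * (complex_of_real (1 / ar n) * D (n+1) + u' n)"
          using D(3)[of n] by (simp add: norm_divide)
        also have "\<dots> = D (n+1) - u n" unfolding u'_def using a0
          by (simp add: field_simps of_real_divide)
        finally show ?thesis by (simp add: norm_divide)
      qed
      thus "\<exists>S. l2 S \<and> nrm S \<le> max K 0 * (1 / am)\<^sup>2 * nrm u \<and> (\<forall>n. S (n+1) = complex_of_real (ar n) * S n + u n)"
        using D(1) nD by blast
    qed
  next
    case False
    hence F: "eL < bL" "eR < bR" using cond by auto
    have zL1: "zL < 1" and zR1: "zR < 1" using zL_lt1 zR_lt1 F by auto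
    have nr: "cmod (complex_of_real (ar n)) = ar n" for n using ar_pos[of n] by (simp add: norm_divide)
    have B: "cmod (complex_of_real (ar n)) \<le> AM" for n unfolding nr by (rule AM)
    define \<epsilon> where "\<epsilon> = (1 - zR) / 2"
    have e0: "\<epsilon> > 0" unfolding \<epsilon>_def using zR1 by (simp add: norm_divide)
    obtain M1 where M1: "\<And>n. n \<ge> M1 \<Longrightarrow> \<bar>ar n - zR\<bar> \<le> \<epsilon>" using ar_conv[OF e0] by auto
    define r where "r = max zL ((zR + 1) / 2)"
    have r1: "r < 1" unfolding r_def using zL1 zR1 by auto
    have rt: "cmod (complex_of_real (ar n)) \<le> r" if n: "n \<ge> M1" for n
    proof -
      have "ar n \<le> zR + \<epsilon>" using M1[of n] n by (auto simp: abs_le_iff)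
      hence "ar n \<le> (zR + 1) / 2" by (simp add: \<epsilon>_def field_simps)
      thus ?thesis unfolding nr r_def by (simp add: le_max_iff_disj)
    qed
    have lt: "cmod (complex_of_real (ar n)) \<le> r" if n: "n \<le> - (N + 2)" for n
      unfolding nr r_def using ar_left[of n] n by auto
    show ?thesis by (rule solve_fwd[where \<rho>="\<lambda>n. complex_of_real (ar n)", OF B r1 ev_abs[where P="\<lambda>n. cmod (complex_of_real (ar n)) \<le> r" and Ma="M1" and Mb="N+2", OF rt lt]])
  qed
qed

lemma solve_D:
  assumes cond: "(eL > bL \<and> eR > bR) \<or> (eL < bL \<and> eR < bR)"
  shows "\<exists>K. \<forall>u. l2 u \<longrightarrow> (\<exists>D. l2 D \<and> nrm D \<le> K * nrm u \<and>
      (\<forall>n. D (n+1) = complex_of_real (b n / c n) * D n + u n))"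
proof -
  obtain bm where bm: "bm > 0" "\<And>n. bm \<le> b n" using b_lb by auto
  obtain cm where cm: "cm > 0" "\<And>n. cm \<le> c n" using c_lb by auto
  obtain BM where BM: "\<And>n. b n \<le> BM" using b_ub by auto
  obtain CM where CM: "\<And>n. c n \<le> CM" using c_ub by auto
  show ?thesis
  proof (cases "eL > bL \<and> eR > bR")
    case True
    have nr: "cmod (complex_of_real (b n / c n)) = b n / c n" for n using bpos[of n] cpos[of n] by (simp add: norm_divide)
    have B: "cmod (complex_of_real (b n / c n)) \<le> BM / cm" for n
      unfolding nr by (rule frac_le) (use BM[of n] bpos[of n] cm in auto)
    define r where "r = max (bL / eL) (bR / eR)"
    have r1: "r < 1" unfolding r_def using True bL bR eL eR by auto
    have rt: "cmod (complex_of_real (b n / c n)) \<le> r" if n: "n \<ge> N" for n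
      unfolding nr r_def using right[of n] n by auto
    have lt: "cmod (complex_of_real (b n / c n)) \<le> r" if n: "n \<le> - N" for n
      unfolding nr r_def using left[of n] n by auto
    show ?thesis by (rule solve_fwd[where \<rho>="\<lambda>n. complex_of_real (b n / c n)", OF B r1 ev_abs[where P="\<lambda>n. cmod (complex_of_real (b n / c n)) \<le> r" and Ma=N and Mb=N, OF rt lt]])
  next
    case False
    hence F: "eL < bL" "eR < bR" using cond by auto
    have nr: "cmod (complex_of_real (c n / b n)) = c n / b n" for n using bpos[of n] cpos[of n] by (simp add: norm_divide)
    have B: "cmod (complex_of_real (c n / b n)) \<le> CM / bm" for n
      unfolding nr by (rule frac_le) (use CM[of n] cpos[of n] bm in auto)
    define r where "r = max (eL / bL) (eR / bR)"
    have r1: "r < 1" unfolding r_def using F bL bR eL eR by auto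
    have rt: "cmod (complex_of_real (c n / b n)) \<le> r" if n: "n \<ge> N" for n
      unfolding nr r_def using right[of n] n by auto
    have lt: "cmod (complex_of_real (c n / b n)) \<le> r" if n: "n \<le> - N" for n
      unfolding nr r_def using left[of n] n by auto
    obtain K where K: "\<forall>u. l2 u \<longrightarrow> (\<exists>D. l2 D \<and> nrm D \<le> K * nrm u \<and>
        (\<forall>n. D n = complex_of_real (c n / b n) * D (n+1) + u n))"
      using solve_bwd[where \<rho>="\<lambda>n. complex_of_real (c n / b n)", OF B r1 ev_abs[where P="\<lambda>n. cmod (complex_of_real (c n / b n)) \<le> r" and Ma=N and Mb=N, OF rt lt]] by blast
    show ?thesis
    proof (rule exI[of _ "max K 0 * (CM / bm)\<^sup>2"], intro allI impI)
      fix u assume u: "l2 u"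
      define u' where "u' n = complex_of_real (- (c n / b n)) * u n" for n
      have u'l: "l2 u' \<and> nrm u' \<le> (CM / bm)\<^sup>2 * nrm u" unfolding u'_def
      proof (rule l2_mult[OF _ u])
        fix n show "cmod (complex_of_real (- (c n / b n))) \<le> CM / bm"
          using B[of n] by (simp add: norm_divide)
      qed
      obtain D where D: "l2 D" "nrm D \<le> K * nrm u'" "\<And>n. D n = complex_of_real (c n / b n) * D (n+1) + u' n"
        using K u'l by blast
      have "K * nrm u' \<le> max K 0 * nrm u'" by (rule mult_right_mono) (auto simp: nrm_nonneg)
      also have "\<dots> \<le> max K 0 * ((CM / bm)\<^sup>2 * nrm u)" using u'l by (intro mult_left_mono) auto
      finally have nD: "nrm D \<le> max K 0 * (CM / bm)\<^sup>2 * nrm u" using D(2) by (simp add: mult.assoc)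
      have "D (n+1) = complex_of_real (b n / c n) * D n + u n" for n
      proof -
        have b0: "complex_of_real (b n) \<noteq> 0" "complex_of_real (c n) \<noteq> 0" using bpos[of n] cpos[of n] by auto
        have "D n = complex_of_real (c n / b n) * (D (n+1) - u n)"
          using D(3)[of n] unfolding u'_def by (simp only: of_real_minus right_diff_distrib mult_minus_left) simp
        thus ?thesis using b0 by (simp add: field_simps of_real_divide)
      qed
      thus "\<exists>S. l2 S \<and> nrm S \<le> max K 0 * (CM / bm)\<^sup>2 * nrm u \<and> (\<forall>n. S (n+1) = complex_of_real (b n / c n) * S n + u n)"
        using D(1) nD by blast
    qed
  qed
qed

end

definition evc :: "(int \<Rightarrow> real) \<Rightarrow> bool" where
  "evc f \<longleftrightarrow> (\<exists>x y K. (\<forall>n. n \<ge> K \<longrightarrow> f n = x) \<and> (\<forall>n. n \<le> -K \<longrightarrow> f n = y))"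

lemma evc_comb:
  assumes "evc f" "evc g"
  shows "evc (\<lambda>n. h (f n) (g n))"
proof -
  obtain x1 y1 K1 where 1: "\<And>n. n \<ge> K1 \<Longrightarrow> f n = x1" "\<And>n. n \<le> -K1 \<Longrightarrow> f n = y1"
    using assms(1) unfolding evc_def by blast
  obtain x2 y2 K2 where 2: "\<And>n. n \<ge> K2 \<Longrightarrow> g n = x2" "\<And>n. n \<le> -K2 \<Longrightarrow> g n = y2"
    using assms(2) unfolding evc_def by blast
  show ?thesis unfolding evc_def
    by (rule exI[of _ "h x1 x2"], rule exI[of _ "h y1 y2"], rule exI[of _ "max K1 K2"]) (use 1 2 in auto)
qed

lemma evc_const: "evc (\<lambda>n. a)"
  unfolding evc_def by auto

lemma evc_shift:
  assumes "evc f" shows "evc (\<lambda>n. f (n + k))"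
proof -
  obtain x1 y1 K1 where 1: "\<And>n. n \<ge> K1 \<Longrightarrow> f n = x1" "\<And>n. n \<le> -K1 \<Longrightarrow> f n = y1"
    using assms(1) unfolding evc_def by blast
  show ?thesis unfolding evc_def
    by (rule exI[of _ x1], rule exI[of _ y1], rule exI[of _ "\<bar>K1\<bar> + \<bar>k\<bar>"]) (use 1 in auto)
qed

lemma evc_bound:
  assumes "evc f" shows "\<exists>B. \<forall>n. cmod (complex_of_real (f n)) \<le> B"
proof -
  obtain x1 y1 K1 where 1: "\<And>n. n \<ge> K1 \<Longrightarrow> f n = x1" "\<And>n. n \<le> -K1 \<Longrightarrow> f n = y1"
    using assms(1) unfolding evc_def by blast
  have "finite (range (\<lambda>n. \<bar>f n\<bar>))"
    by (rule fin_range[where K="\<bar>K1\<bar>" and x="\<bar>x1\<bar>" and y="\<bar>y1\<bar>"]) (use 1 in auto)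
  then obtain B where "\<And>n. \<bar>f n\<bar> \<le> B" using fin_ub by blast
  thus ?thesis by auto
qed

context chain begin

lemma evc_b: "evc b" unfolding evc_def using left right by blast
lemma evc_c: "evc c" unfolding evc_def using left right by blast
lemma evc_d: "evc d" unfolding evc_def using left right by blast

definition T1 :: "(int \<Rightarrow> complex) \<Rightarrow> (int \<Rightarrow> complex) \<Rightarrow> (int \<Rightarrow> complex) \<Rightarrow> int \<Rightarrow> complex" where
  "T1 X4 X5 X6 n = - complex_of_real (b n) * X4 n - complex_of_real (b n) * X5 n - complex_of_real (c n) * X6 (n+1)"
definition T2 :: "(int \<Rightarrow> complex) \<Rightarrow> (int \<Rightarrow> complex) \<Rightarrow> (int \<Rightarrow> complex) \<Rightarrow> int \<Rightarrow> complex" where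
  "T2 X4 X5 X6 n = - complex_of_real (b n) * X4 n - complex_of_real (d (n-2)) * X5 (n-2) - complex_of_real (b n) * X6 n"
definition T3 :: "(int \<Rightarrow> complex) \<Rightarrow> (int \<Rightarrow> complex) \<Rightarrow> (int \<Rightarrow> complex) \<Rightarrow> int \<Rightarrow> complex" where
  "T3 X4 X5 X6 n = - complex_of_real (c n) * X4 (n+1) - complex_of_real (b n) * X5 n - complex_of_real (b n) * X6 n"

lemma solve2:
  assumes cond: "(eL > bL \<and> eR > bR) \<or> (eL < bL \<and> eR < bR)"
  shows "\<exists>K. \<forall>g. l2 g \<longrightarrow> (\<exists>S. l2 S \<and> nrm S \<le> K * nrm g \<and>
      (\<forall>n. S (n+2) = complex_of_real (pp n) * S (n+1) + complex_of_real (qq n) * S n + g n))"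
proof -
  obtain Km where Km: "\<forall>u. l2 u \<longrightarrow> (\<exists>D. l2 D \<and> nrm D \<le> Km * nrm u \<and>
      (\<forall>n. D (n+1) = complex_of_real (- qq n / ar n) * D n + u n))" using solve_m by blast
  obtain Ka where Ka: "\<forall>u. l2 u \<longrightarrow> (\<exists>S. l2 S \<and> nrm S \<le> Ka * nrm u \<and>
      (\<forall>n. S (n+1) = complex_of_real (ar n) * S n + u n))" using solve_a[OF cond] by blast
  show ?thesis
  proof (rule exI[of _ "max Ka 0 * max Km 0"], intro allI impI)
    fix g assume g: "l2 g"
    obtain \<sigma> where \<sigma>: "l2 \<sigma>" "nrm \<sigma> \<le> Km * nrm g" "\<And>n. \<sigma> (n+1) = complex_of_real (- qq n / ar n) * \<sigma> n + g n"
      using Km g by blast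
    obtain S where S: "l2 S" "nrm S \<le> Ka * nrm \<sigma>" "\<And>n. S (n+1) = complex_of_real (ar n) * S n + \<sigma> n"
      using Ka \<sigma>(1) by blast
    have "nrm S \<le> max Ka 0 * nrm \<sigma>" using S(2) mult_right_mono[of Ka "max Ka 0" "nrm \<sigma>"] nrm_nonneg[of \<sigma>] by simp
    also have "\<dots> \<le> max Ka 0 * (max Km 0 * nrm g)"
      using \<sigma>(2) mult_right_mono[of Km "max Km 0" "nrm g"] nrm_nonneg[of g] by (intro mult_left_mono) auto
    finally have nS: "nrm S \<le> max Ka 0 * max Km 0 * nrm g" by (simp add: mult.assoc)
    have "S (n+2) = complex_of_real (pp n) * S (n+1) + complex_of_real (qq n) * S n + g n" for n
    proof -
      have a0: "complex_of_real (ar n) \<noteq> 0" using ar_pos[of n] by simp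
      have e1: "S (n+2) = complex_of_real (ar (n+1)) * S (n+1) + \<sigma> (n+1)" using S(3)[of "n+1"] by (simp add: add.assoc)
      have e2: "\<sigma> n = S (n+1) - complex_of_real (ar n) * S n" using S(3)[of n] by simp
      have e3: "complex_of_real (ar (n+1)) = complex_of_real (pp n) + complex_of_real (qq n) / complex_of_real (ar n)"
        using ar_step[of n] by simp
      show ?thesis unfolding e1 \<sigma>(3) e2 e3 using a0 by (simp add: field_simps)
    qed
    thus "\<exists>S. l2 S \<and> nrm S \<le> max Ka 0 * max Km 0 * nrm g \<and>
      (\<forall>n. S (n+2) = complex_of_real (pp n) * S (n+1) + complex_of_real (qq n) * S n + g n)"
      using S(1) nS by blast
  qed
qed

end

lemma alg1:
  fixes B B2 C Dd S0 S1 S2 D0 D1 f1 f2 f3 X40 X41 X5 X60 X61 :: complex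
  assumes nz: "B \<noteq> 0" "B2 \<noteq> 0" "C \<noteq> 0" "Dd \<noteq> 0"
    and S2: "S2 = (C * Dd / (2 * B * B2)) * S1 + (Dd / (2 * B2)) * S0 + ((Dd / (2 * B * B2)) * f1 + (Dd / (2 * B * B2)) * f3 + (- 1 / B2) * f2)"
    and D1: "D1 = (B / C) * D0 + ((1 / C) * f1 + (- 1 / C) * f3)"
    and X4: "X40 = (1/2) * S0 + (1/2) * D0" "X41 = (1/2) * S1 + (1/2) * D1"
    and X6: "X60 = (1/2) * S0 + (- 1/2) * D0" "X61 = (1/2) * S1 + (- 1/2) * D1"
    and X5: "X5 = (- 1 / Dd) * f2 + (- B2 / Dd) * S2"
  shows "- B * X40 - B * X5 - C * X61 = f1" "- C * X41 - B * X5 - B * X60 = f3"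
  using nz unfolding X4 X6 X5 S2 D1 by (simp_all add: field_simps)

type_synonym trip = "(int \<Rightarrow> complex) \<times> (int \<Rightarrow> complex) \<times> (int \<Rightarrow> complex)"

lemma fbm:
  assumes "evc h" "fb P t f" "\<And>x. P x \<Longrightarrow> t x \<ge> 0"
  shows "fb P t (\<lambda>x n. complex_of_real (h n) * f x n)"
proof -
  obtain B where B: "\<And>n. cmod (complex_of_real (h n)) \<le> B" using evc_bound[OF assms(1)] by blast
  show ?thesis by (rule fb_mult[OF assms(2) B assms(3)])
qed

lemma evc_un: "evc f \<Longrightarrow> evc (\<lambda>n. h (f n))"
  using evc_comb[of f f "\<lambda>a b. h a"] by simp

context chain begin

lemma solveT:
  assumes cond: "(eL > bL \<and> eR > bR) \<or> (eL < bL \<and> eR < bR)"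
  shows "\<exists>K. \<forall>F1 F2 F3. l2 F1 \<and> l2 F2 \<and> l2 F3 \<longrightarrow> (\<exists>X4 X5 X6. l2 X4 \<and> l2 X5 \<and> l2 X6 \<and>
     nrm X4 + nrm X5 + nrm X6 \<le> K * (nrm F1 + nrm F2 + nrm F3) \<and>
     T1 X4 X5 X6 = F1 \<and> T2 X4 X5 X6 = F2 \<and> T3 X4 X5 X6 = F3)"
proof -
  define P :: "trip \<Rightarrow> bool"
    where "P x \<longleftrightarrow> l2 (fst x) \<and> l2 (fst (snd x)) \<and> l2 (snd (snd x))" for x
  define t :: "trip \<Rightarrow> real"
    where "t x = nrm (fst x) + nrm (fst (snd x)) + nrm (snd (snd x))" for x
  have t0: "\<And>x. P x \<Longrightarrow> t x \<ge> 0" unfolding t_def using nrm_nonneg by (simp add: add_nonneg_nonneg)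
  have f1: "fb P t (\<lambda>x. fst x)" by (rule fbI[where K=1]) (auto simp: P_def t_def nrm_nonneg)
  have f2: "fb P t (\<lambda>x. fst (snd x))" by (rule fbI[where K=1]) (auto simp: P_def t_def nrm_nonneg)
  have f3: "fb P t (\<lambda>x. snd (snd x))" by (rule fbI[where K=1]) (auto simp: P_def t_def nrm_nonneg)
  have eb2: "evc (\<lambda>n. b (n + 2))" by (rule evc_shift[OF evc_b])
  define uD where "uD x n = complex_of_real (1 / c n) * fst x n + complex_of_real (- 1 / c n) * snd (snd x) n" for x :: trip and n
  have fuD: "fb P t uD" unfolding uD_def
    by (intro fb_add fbm f1 f3 evc_un[OF evc_c] t0)
  obtain KD where KD: "\<forall>u. l2 u \<longrightarrow> (\<exists>D. l2 D \<and> nrm D \<le> KD * nrm u \<and>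
      (\<lambda>u D. \<forall>n. D (n+1) = complex_of_real (b n / c n) * D n + u n) u D)"
    using solve_D[OF cond] by auto
  define Dx where "Dx x = (SOME D. l2 D \<and> nrm D \<le> KD * nrm (uD x) \<and>
      (\<lambda>u D. \<forall>n. D (n+1) = complex_of_real (b n / c n) * D n + u n) (uD x) D)" for x :: trip
  have fD: "fb P t Dx" unfolding Dx_def by (rule fb_sol(1)[OF KD fuD t0])
  have rD: "P x \<Longrightarrow> Dx x (n+1) = complex_of_real (b n / c n) * Dx x n + uD x n" for x :: trip and n
    using fb_sol(2)[OF KD fuD t0, of x] unfolding Dx_def by blast
  define gS where "gS x n = complex_of_real (d n / (2 * b n * b (n+2))) * fst x n
      + complex_of_real (d n / (2 * b n * b (n+2))) * snd (snd x) n
      + complex_of_real (- 1 / b (n+2)) * fst (snd x) (n+2)" for x :: trip and n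
  have eg: "evc (\<lambda>n. d n / (2 * b n * b (n+2)))"
    by (rule evc_comb[OF evc_d evc_comb[OF evc_b eb2]])
  have fgS: "fb P t gS" unfolding gS_def
    by (intro fb_add fbm f1 f3 fb_shift[OF f2] evc_un[OF eb2] eg t0)
  obtain KS where KS: "\<forall>g. l2 g \<longrightarrow> (\<exists>S. l2 S \<and> nrm S \<le> KS * nrm g \<and>
      (\<lambda>g S. \<forall>n. S (n+2) = complex_of_real (pp n) * S (n+1) + complex_of_real (qq n) * S n + g n) g S)"
    using solve2[OF cond] by auto
  define Sx where "Sx x = (SOME S. l2 S \<and> nrm S \<le> KS * nrm (gS x) \<and>
      (\<lambda>g S. \<forall>n. S (n+2) = complex_of_real (pp n) * S (n+1) + complex_of_real (qq n) * S n + g n) (gS x) S)" for x :: trip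
  have fS: "fb P t Sx" unfolding Sx_def by (rule fb_sol(1)[OF KS fgS t0])
  have rS: "P x \<Longrightarrow> Sx x (n+2) = complex_of_real (pp n) * Sx x (n+1) + complex_of_real (qq n) * Sx x n + gS x n" for x :: trip and n
    using fb_sol(2)[OF KS fgS t0, of x] unfolding Sx_def by blast
  define X5 where "X5 x n = complex_of_real (- 1 / d n) * fst (snd x) (n+2) + complex_of_real (- b (n+2) / d n) * Sx x (n+2)" for x :: trip and n
  define X4 where "X4 x n = complex_of_real (1 / 2) * Sx x n + complex_of_real (1 / 2) * Dx x n" for x :: trip and n
  define X6 where "X6 x n = complex_of_real (1 / 2) * Sx x n + complex_of_real (- 1 / 2) * Dx x n" for x :: trip and n
  have f5: "fb P t X5" unfolding X5_def
    by (intro fb_add fbm fb_shift[OF f2] fb_shift[OF fS] evc_un[OF evc_d] evc_comb[OF eb2 evc_d] t0)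
  have f4: "fb P t X4" unfolding X4_def by (intro fb_add fbm fS fD evc_const t0)
  have f6: "fb P t X6" unfolding X6_def by (intro fb_add fbm fS fD evc_const t0)
  obtain K4 where K4: "\<And>x. P x \<Longrightarrow> nrm (X4 x) \<le> K4 * t x" using fb_K[OF f4 t0] by blast
  obtain K5 where K5: "\<And>x. P x \<Longrightarrow> nrm (X5 x) \<le> K5 * t x" using fb_K[OF f5 t0] by blast
  obtain K6 where K6: "\<And>x. P x \<Longrightarrow> nrm (X6 x) \<le> K6 * t x" using fb_K[OF f6 t0] by blast
  show ?thesis
  proof (rule exI[of _ "K4 + K5 + K6"], intro allI impI)
    fix F1 F2 F3 assume F: "l2 F1 \<and> l2 F2 \<and> l2 F3"
    define x where "x = (F1, F2, F3)"
    have Px: "P x" unfolding P_def x_def using F by simp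
    have tx: "t x = nrm F1 + nrm F2 + nrm F3" unfolding t_def x_def by simp
    have e13: "T1 (X4 x) (X5 x) (X6 x) n = F1 n \<and> T3 (X4 x) (X5 x) (X6 x) n = F3 n" for n
    proof -
      let ?B = "complex_of_real (b n)" and ?B2 = "complex_of_real (b (n+2))"
      let ?C = "complex_of_real (c n)" and ?Dd = "complex_of_real (d n)"
      have nz: "?B \<noteq> 0" "?B2 \<noteq> 0" "?C \<noteq> 0" "?Dd \<noteq> 0"
        using bpos[of n] bpos[of "n+2"] cpos[of n] dpos[of n] by auto
      have S2: "Sx x (n+2) = (?C * ?Dd / (2 * ?B * ?B2)) * Sx x (n+1) + (?Dd / (2 * ?B2)) * Sx x n
          + ((?Dd / (2 * ?B * ?B2)) * F1 n + (?Dd / (2 * ?B * ?B2)) * F3 n + (- 1 / ?B2) * F2 (n+2))"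
        using rS[OF Px, of n] by (simp add: pp_def qq_def gS_def x_def)
      have D1: "Dx x (n+1) = (?B / ?C) * Dx x n + ((1 / ?C) * F1 n + (- 1 / ?C) * F3 n)"
        using rD[OF Px, of n] by (simp add: uD_def x_def)
      have X4e: "X4 x n = (1/2) * Sx x n + (1/2) * Dx x n" "X4 x (n+1) = (1/2) * Sx x (n+1) + (1/2) * Dx x (n+1)"
        by (simp_all add: X4_def)
      have X6e: "X6 x n = (1/2) * Sx x n + (- 1/2) * Dx x n" "X6 x (n+1) = (1/2) * Sx x (n+1) + (- 1/2) * Dx x (n+1)"
        by (simp_all add: X6_def)
      have X5e: "X5 x n = (- 1 / ?Dd) * F2 (n+2) + (- ?B2 / ?Dd) * Sx x (n+2)"
        by (simp add: X5_def x_def)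
      show ?thesis unfolding T1_def T3_def using alg1[OF nz S2 D1 X4e X6e X5e] by simp
    qed
    have e2: "T2 (X4 x) (X5 x) (X6 x) n = F2 n" for n
    proof -
      have nz: "complex_of_real (d (n-2)) \<noteq> 0" using dpos[of "n-2"] by auto
      have h: "X5 x (n-2) = (- 1 / complex_of_real (d (n-2))) * F2 n + (- complex_of_real (b n) / complex_of_real (d (n-2))) * Sx x n"
        by (simp add: X5_def x_def)
      show ?thesis unfolding T2_def X4_def X6_def h using nz by (simp add: field_simps)
    qed
    have eqs: "T1 (X4 x) (X5 x) (X6 x) = F1 \<and> T2 (X4 x) (X5 x) (X6 x) = F2 \<and> T3 (X4 x) (X5 x) (X6 x) = F3"
      using e13 e2 by auto
    show "\<exists>X4 X5 X6. l2 X4 \<and> l2 X5 \<and> l2 X6 \<and>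
     nrm X4 + nrm X5 + nrm X6 \<le> (K4 + K5 + K6) * (nrm F1 + nrm F2 + nrm F3) \<and>
     T1 X4 X5 X6 = F1 \<and> T2 X4 X5 X6 = F2 \<and> T3 X4 X5 X6 = F3"
      using fb_l2[OF f4 Px] fb_l2[OF f5 Px] fb_l2[OF f6 Px] K4[OF Px] K5[OF Px] K6[OF Px] eqs tx
      by (intro exI[of _ "X4 x"] exI[of _ "X5 x"] exI[of _ "X6 x"]) (simp add: algebra_simps)
  qed
qed

end

lemma alg2:
  fixes B B2 C Dd S0 S1 S2 X5 :: complex
  assumes "B \<noteq> 0" "B2 \<noteq> 0" "Dd \<noteq> 0"
    and "- B * S0 - 2 * B * X5 - C * S1 = 0" and "X5 = (- B2 / Dd) * S2"
  shows "S2 = (C * Dd / (2 * B * B2)) * S1 + (Dd / (2 * B2)) * S0"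
  using assms by (simp add: field_simps)

context chain begin

lemma ker_decomp:
  assumes T: "T1 X4 X5 X6 = (\<lambda>n. 0)" "T2 X4 X5 X6 = (\<lambda>n. 0)" "T3 X4 X5 X6 = (\<lambda>n. 0)"
  shows "\<And>n. X4 (n+1) - X6 (n+1) = complex_of_real (b n / c n) * (X4 n - X6 n)"
    and "\<And>n. X5 n = complex_of_real (- b (n+2) / d n) * (X4 (n+2) + X6 (n+2))"
    and "\<And>n. X4 (n+2) + X6 (n+2) = complex_of_real (pp n) * (X4 (n+1) + X6 (n+1)) + complex_of_real (qq n) * (X4 n + X6 n)"
proof -
  fix n
  have t1: "T1 X4 X5 X6 n = 0" and t3: "T3 X4 X5 X6 n = 0" and t2: "T2 X4 X5 X6 (n+2) = 0"
    using T by (auto dest: fun_cong)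
  have nz: "complex_of_real (b n) \<noteq> 0" "complex_of_real (c n) \<noteq> 0" "complex_of_real (d n) \<noteq> 0"
     "complex_of_real (b (n+2)) \<noteq> 0" using bpos[of n] cpos[of n] dpos[of n] bpos[of "n+2"] by auto
  show "X4 (n+1) - X6 (n+1) = complex_of_real (b n / c n) * (X4 n - X6 n)"
  proof -
    let ?B = "complex_of_real (b n)" and ?C = "complex_of_real (c n)"
    have h1: "- ?B * X4 n - ?B * X5 n - ?C * X6 (n+1) = 0" using t1 unfolding T1_def .
    have h3: "- ?C * X4 (n+1) - ?B * X5 n - ?B * X6 n = 0" using t3 unfolding T3_def .
    have "?C * (X4 (n+1) - X6 (n+1)) - ?B * (X4 n - X6 n)
        = (- ?B * X4 n - ?B * X5 n - ?C * X6 (n+1)) - (- ?C * X4 (n+1) - ?B * X5 n - ?B * X6 n)"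
      by (simp add: algebra_simps)
    hence "?C * (X4 (n+1) - X6 (n+1)) = ?B * (X4 n - X6 n)" unfolding h1 h3 by simp
    thus ?thesis using nz by (simp add: field_simps)
  qed
  show x5: "X5 n = complex_of_real (- b (n+2) / d n) * (X4 (n+2) + X6 (n+2))"
    using t2 nz unfolding T2_def by (simp add: field_simps)
  show "X4 (n+2) + X6 (n+2) = complex_of_real (pp n) * (X4 (n+1) + X6 (n+1)) + complex_of_real (qq n) * (X4 n + X6 n)"
  proof -
    let ?B = "complex_of_real (b n)" and ?C = "complex_of_real (c n)" and ?Dd = "complex_of_real (d n)"
      and ?B2 = "complex_of_real (b (n+2))"
    have h1: "- ?B * X4 n - ?B * X5 n - ?C * X6 (n+1) = 0" using t1 unfolding T1_def .
    have h3: "- ?C * X4 (n+1) - ?B * X5 n - ?B * X6 n = 0" using t3 unfolding T3_def .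
    have "- ?B * (X4 n + X6 n) - 2 * ?B * X5 n - ?C * (X4 (n+1) + X6 (n+1))
        = (- ?B * X4 n - ?B * X5 n - ?C * X6 (n+1)) + (- ?C * X4 (n+1) - ?B * X5 n - ?B * X6 n)"
      by (simp add: algebra_simps)
    hence s: "- ?B * (X4 n + X6 n) - 2 * ?B * X5 n - ?C * (X4 (n+1) + X6 (n+1)) = 0" unfolding h1 h3 by simp
    have x5': "X5 n = (- ?B2 / ?Dd) * (X4 (n+2) + X6 (n+2))" using x5 by simp
    have "X4 (n+2) + X6 (n+2) = (?C * ?Dd / (2 * ?B * ?B2)) * (X4 (n+1) + X6 (n+1)) + (?Dd / (2 * ?B2)) * (X4 n + X6 n)"
      by (rule alg2[OF nz(1,4,3) s x5'])
    thus ?thesis unfolding pp_def qq_def by simp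
  qed
qed

lemma recon:
  assumes D: "\<And>n. Dv (n+1) = complex_of_real (b n / c n) * Dv n"
    and S: "\<And>n. Sv (n+2) = complex_of_real (pp n) * Sv (n+1) + complex_of_real (qq n) * Sv n"
  defines "V4 \<equiv> \<lambda>n. 1/2 * Sv n + 1/2 * Dv n"
    and "V5 \<equiv> \<lambda>n. complex_of_real (- b (n+2) / d n) * Sv (n+2)"
    and "V6 \<equiv> \<lambda>n. 1/2 * Sv n + (- 1/2) * Dv n"
  shows "T1 V4 V5 V6 = (\<lambda>n. 0) \<and> T2 V4 V5 V6 = (\<lambda>n. 0) \<and> T3 V4 V5 V6 = (\<lambda>n. 0)"
proof -
  have e13: "T1 V4 V5 V6 n = 0 \<and> T3 V4 V5 V6 n = 0" for n
  proof -
    let ?B = "complex_of_real (b n)" and ?B2 = "complex_of_real (b (n+2))"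
    let ?C = "complex_of_real (c n)" and ?Dd = "complex_of_real (d n)"
    have nz: "?B \<noteq> 0" "?B2 \<noteq> 0" "?C \<noteq> 0" "?Dd \<noteq> 0"
      using bpos[of n] bpos[of "n+2"] cpos[of n] dpos[of n] by auto
    have S2: "Sv (n+2) = (?C * ?Dd / (2 * ?B * ?B2)) * Sv (n+1) + (?Dd / (2 * ?B2)) * Sv n
        + ((?Dd / (2 * ?B * ?B2)) * 0 + (?Dd / (2 * ?B * ?B2)) * 0 + (- 1 / ?B2) * 0)"
      using S[of n] by (simp add: pp_def qq_def)
    have D1: "Dv (n+1) = (?B / ?C) * Dv n + ((1 / ?C) * 0 + (- 1 / ?C) * 0)"
      using D[of n] by simp
    have X4e: "V4 n = (1/2) * Sv n + (1/2) * Dv n" "V4 (n+1) = (1/2) * Sv (n+1) + (1/2) * Dv (n+1)"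
      by (simp_all add: V4_def)
    have X6e: "V6 n = (1/2) * Sv n + (- 1/2) * Dv n" "V6 (n+1) = (1/2) * Sv (n+1) + (- 1/2) * Dv (n+1)"
      by (simp_all add: V6_def)
    have X5e: "V5 n = (- 1 / ?Dd) * 0 + (- ?B2 / ?Dd) * Sv (n+2)"
      by (simp add: V5_def)
    show ?thesis unfolding T1_def T3_def using alg1[OF nz S2 D1 X4e X6e X5e] by simp
  qed
  have e2: "T2 V4 V5 V6 n = 0" for n
  proof -
    have nz: "complex_of_real (d (n-2)) \<noteq> 0" using dpos[of "n-2"] by auto
    have h: "V5 (n-2) = (- complex_of_real (b n) / complex_of_real (d (n-2))) * Sv n"
      by (simp add: V5_def)
    show ?thesis unfolding T2_def V4_def V6_def h using nz by (simp add: field_simps)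
  qed
  show ?thesis using e13 e2 by auto
qed

lemma ar_bnd: "\<exists>B. \<forall>n. cmod (complex_of_real (ar n)) \<le> B"
proof -
  obtain B where "\<And>n. ar n \<le> B" using ar_ub by auto
  thus ?thesis using ar_pos by (intro exI[of _ B]) (auto simp: less_imp_le)
qed

lemma S_first:
  assumes l: "l2 S" and S: "\<And>n. S (n+2) = complex_of_real (pp n) * S (n+1) + complex_of_real (qq n) * S n"
  shows "S (n+1) = complex_of_real (ar n) * S n"
proof -
  define \<sigma> where "\<sigma> n = S (n+1) + complex_of_real (- ar n) * S n" for n
  obtain B where B: "\<And>n. cmod (complex_of_real (ar n)) \<le> B" using ar_bnd by auto
  have l\<sigma>: "l2 \<sigma>" unfolding \<sigma>_def
    by (rule conjunct1[OF l2_add[OF conjunct1[OF l2_shift[OF l]] conjunct1[OF l2_mult[OF _ l]]]]) (use B in simp)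
  have rec: "\<sigma> (n+1) = complex_of_real (- qq n / ar n) * \<sigma> n" for n
  proof -
    have a0: "complex_of_real (ar n) \<noteq> 0" using ar_pos[of n] by simp
    have e3: "complex_of_real (ar (n+1)) = complex_of_real (pp n) + complex_of_real (qq n) / complex_of_real (ar n)"
      using ar_step[of n] by simp
    have "\<sigma> (n+1) = S (n+2) - complex_of_real (ar (n+1)) * S (n+1)" unfolding \<sigma>_def by (simp add: add.assoc)
    thus ?thesis unfolding S e3 \<sigma>_def using a0 by (simp add: field_simps)
  qed
  have b1: "cmod (complex_of_real (- qq n / ar n)) \<le> 1" if "n \<le> -(N+2)" for n
  proof -
    have "qq n = qL" "ar n = zL" using pq_left[of n] ar_left[of n] that by auto
    thus ?thesis using qL_zL qL_pos zL by (simp add: norm_divide)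
  qed
  have "\<sigma> n = 0" by (rule zero_left[OF l\<sigma> rec b1])
  thus ?thesis unfolding \<sigma>_def by simp
qed

lemma S_zero_L:
  assumes "eL < bL" "l2 S" "\<And>n. S (n+2) = complex_of_real (pp n) * S (n+1) + complex_of_real (qq n) * S n"
  shows "S n = 0"
proof (rule zero_left[OF assms(2) S_first[OF assms(2,3)]])
  fix n :: int assume "n \<le> -(N+2)"
  thus "cmod (complex_of_real (ar n)) \<le> 1" using ar_left[of n] zL_lt1[OF assms(1)] zL by simp
qed

lemma S_zero_GG:
  assumes "eL > bL" "eR > bR" "l2 S" "\<And>n. S (n+2) = complex_of_real (pp n) * S (n+1) + complex_of_real (qq n) * S n"
  shows "S n = 0"
proof -
  have z1: "zR > 1" using zR_gt1[OF assms(2)] .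
  obtain M1 where M1: "\<And>n. n \<ge> M1 \<Longrightarrow> \<bar>ar n - zR\<bar> \<le> zR - 1" using ar_conv[of "zR - 1"] z1 by auto
  show ?thesis
  proof (rule zero_right[OF assms(3) S_first[OF assms(3,4)]])
    fix n show "complex_of_real (ar n) \<noteq> 0" using ar_pos[of n] by simp
  next
    fix n :: int assume "n \<ge> M1"
    hence "ar n \<ge> 1" using M1[of n] by (auto simp: abs_le_iff)
    thus "cmod (complex_of_real (ar n)) \<ge> 1" by simp
  qed
qed

lemma S_mode_l2:
  assumes "eL > bL" "eR < bR"
  shows "l2 (ps (\<lambda>n. complex_of_real (ar n)))"
proof -
  have z: "zL > 1" "zR < 1" using zL_gt1[OF assms(1)] zR_lt1[OF assms(2)] by auto
  obtain M1 where M1: "\<And>n. n \<ge> M1 \<Longrightarrow> \<bar>ar n - zR\<bar> \<le> (1 - zR) / 2" using ar_conv[of "(1 - zR) / 2"] z by auto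
  define M where "M = max (max M1 (N+2)) 0"
  show ?thesis
  proof (rule ps_l2[where M=M and r="(1 + zR) / 2" and R=zL])
    fix n show "complex_of_real (ar n) \<noteq> 0" using ar_pos[of n] by simp
  next
    show "M \<ge> 0" unfolding M_def by simp
  next
    show "0 \<le> (1 + zR) / 2" using zR by simp
  next
    show "(1 + zR) / 2 < 1" using z by simp
  next
    fix n :: int assume "n \<ge> M"
    hence "\<bar>ar n - zR\<bar> \<le> (1 - zR) / 2" using M1[of n] unfolding M_def by auto
    hence "ar n \<le> zR + (1 - zR) / 2" by (simp only: abs_le_iff) linarith
    thus "cmod (complex_of_real (ar n)) \<le> (1 + zR) / 2" using ar_pos[of n] by (simp add: field_simps)
  next
    show "zL > 1" using z by simp
  next
    fix n :: int assume "n \<le> -M"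
    hence "ar n = zL" using ar_left[of n] unfolding M_def by simp
    thus "cmod (complex_of_real (ar n)) \<ge> zL" using zL by simp
  qed
qed

lemma D_zero_L:
  assumes "eL > bL" "l2 D" "\<And>n. D (n+1) = complex_of_real (b n / c n) * D n"
  shows "D n = 0"
proof (rule zero_left[OF assms(2,3)])
  fix n :: int assume "n \<le> -N"
  thus "cmod (complex_of_real (b n / c n)) \<le> 1" using left[of n] assms(1) bL eL by (simp add: norm_divide)
qed

lemma D_zero_R:
  assumes "eR < bR" "l2 D" "\<And>n. D (n+1) = complex_of_real (b n / c n) * D n"
  shows "D n = 0"
proof (rule zero_right[OF assms(2,3)])
  fix n show "complex_of_real (b n / c n) \<noteq> 0" using bpos[of n] cpos[of n] by simp
next
  fix n :: int assume "n \<ge> N"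
  thus "cmod (complex_of_real (b n / c n)) \<ge> 1" using right[of n] assms(1) bR eR by (simp add: norm_divide)
qed

lemma D_mode_l2:
  assumes "eL < bL" "eR > bR"
  shows "l2 (ps (\<lambda>n. complex_of_real (b n / c n)))"
proof (rule ps_l2[where M=N and r="bR / eR" and R="bL / eL"])
  fix n show "complex_of_real (b n / c n) \<noteq> 0" using bpos[of n] cpos[of n] by simp
next
  show "N \<ge> 0" by (rule N0)
next
  show "0 \<le> bR / eR" using bR eR by simp
next
  show "bR / eR < 1" using assms bR eR by simp
next
  fix n :: int assume "n \<ge> N"
  thus "cmod (complex_of_real (b n / c n)) \<le> bR / eR" using right[of n] bR eR by (simp add: norm_divide)
next
  show "bL / eL > 1" using assms bL eL by simp
next
  fix n :: int assume "n \<le> -N"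
  thus "cmod (complex_of_real (b n / c n)) \<ge> bL / eL" using left[of n] bL eL by (simp add: norm_divide)
qed

end

context chain begin

lemma ker_parts:
  assumes l: "l2 X4" "l2 X5" "l2 X6"
    and T: "T1 X4 X5 X6 = (\<lambda>n. 0)" "T2 X4 X5 X6 = (\<lambda>n. 0)" "T3 X4 X5 X6 = (\<lambda>n. 0)"
  shows "l2 (\<lambda>n. X4 n - X6 n)" "l2 (\<lambda>n. X4 n + X6 n)"
    and "\<And>n. X4 n = 1/2 * (X4 n + X6 n) + 1/2 * (X4 n - X6 n)"
    and "\<And>n. X6 n = 1/2 * (X4 n + X6 n) + (- 1/2) * (X4 n - X6 n)"
proof -
  show "l2 (\<lambda>n. X4 n + X6 n)" using l2_add[OF l(1,3)] by simp
  have "l2 (\<lambda>n. X4 n + (- 1) * X6 n)" using l2_add[OF l(1) conjunct1[OF l2_cmult[OF l(3), of "-1"]]] by simp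
  thus "l2 (\<lambda>n. X4 n - X6 n)" by simp
  fix n
  show "X4 n = 1/2 * (X4 n + X6 n) + 1/2 * (X4 n - X6 n)" by (simp add: field_simps)
  show "X6 n = 1/2 * (X4 n + X6 n) + (- 1/2) * (X4 n - X6 n)" by (simp add: field_simps)
qed

lemma ker_zero:
  assumes cond: "(eL > bL \<and> eR > bR) \<or> (eL < bL \<and> eR < bR)"
    and l: "l2 X4" "l2 X5" "l2 X6"
    and T: "T1 X4 X5 X6 = (\<lambda>n. 0)" "T2 X4 X5 X6 = (\<lambda>n. 0)" "T3 X4 X5 X6 = (\<lambda>n. 0)"
  shows "X4 = (\<lambda>n. 0) \<and> X5 = (\<lambda>n. 0) \<and> X6 = (\<lambda>n. 0)"
proof -
  note kd = ker_decomp[OF T] and kp = ker_parts[OF l T]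
  have D0: "X4 n - X6 n = 0" for n
  proof (cases "eL > bL")
    case True then show ?thesis using D_zero_L[OF True kp(1)] kd(1) by blast
  next
    case False then show ?thesis using cond D_zero_R[OF _ kp(1)] kd(1) by auto
  qed
  have S0: "X4 n + X6 n = 0" for n
  proof (cases "eL > bL")
    case True then show ?thesis using cond S_zero_GG[OF True _ kp(2)] kd(3) by auto
  next
    case False then show ?thesis using cond S_zero_L[OF _ kp(2)] kd(3) by auto
  qed
  show ?thesis using D0 S0 kd(2) kp(3,4) by (auto simp: fun_eq_iff)
qed

lemma ker_one:
  assumes cond: "(eL < bL \<and> eR > bR) \<or> (eL > bL \<and> eR < bR)"
  shows "\<exists>V4 V5 V6. l2 V4 \<and> l2 V5 \<and> l2 V6 \<and> V4 0 \<noteq> 0 \<and>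
    T1 V4 V5 V6 = (\<lambda>n. 0) \<and> T2 V4 V5 V6 = (\<lambda>n. 0) \<and> T3 V4 V5 V6 = (\<lambda>n. 0) \<and>
    (\<forall>X4 X5 X6. l2 X4 \<and> l2 X5 \<and> l2 X6 \<and> T1 X4 X5 X6 = (\<lambda>n. 0) \<and> T2 X4 X5 X6 = (\<lambda>n. 0) \<and> T3 X4 X5 X6 = (\<lambda>n. 0)
      \<longrightarrow> (\<exists>\<alpha>. X4 = (\<lambda>n. \<alpha> * V4 n) \<and> X5 = (\<lambda>n. \<alpha> * V5 n) \<and> X6 = (\<lambda>n. \<alpha> * V6 n)))"
proof -
  obtain Sv Dv where
    rD: "\<And>n. Dv (n+1) = complex_of_real (b n / c n) * Dv n" and
    rS: "\<And>n. Sv (n+2) = complex_of_real (pp n) * Sv (n+1) + complex_of_real (qq n) * Sv n" and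
    lD: "l2 Dv" and lS: "l2 Sv" and nz: "Sv 0 + Dv 0 \<noteq> 0" and
    span: "\<And>X4 X5 X6. l2 X4 \<Longrightarrow> l2 X5 \<Longrightarrow> l2 X6 \<Longrightarrow> T1 X4 X5 X6 = (\<lambda>n. 0) \<Longrightarrow> T2 X4 X5 X6 = (\<lambda>n. 0) \<Longrightarrow> T3 X4 X5 X6 = (\<lambda>n. 0) \<Longrightarrow>
       \<exists>\<alpha>. \<forall>n. X4 n + X6 n = \<alpha> * Sv n \<and> X4 n - X6 n = \<alpha> * Dv n"
  proof (cases "eL < bL \<and> eR > bR")
    case True
    define \<phi> where "\<phi> = ps (\<lambda>n. complex_of_real (b n / c n))"
    have nzr: "complex_of_real (b n / c n) \<noteq> 0" for n using bpos[of n] cpos[of n] by simp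
    show ?thesis
    proof (rule that[of \<phi> "\<lambda>n. 0"])
      show "\<phi> (n+1) = complex_of_real (b n / c n) * \<phi> n" for n unfolding \<phi>_def by (rule ps_step[where \<rho>="\<lambda>n. complex_of_real (b n / c n)", OF nzr])
      show "l2 \<phi>" unfolding \<phi>_def using D_mode_l2 True by auto
      show "l2 (\<lambda>n. 0)" using l2_zero by simp
      show "(\<lambda>n. 0) 0 + \<phi> 0 \<noteq> 0" unfolding \<phi>_def by (simp add: ps_0)
      show "(\<lambda>n. 0) (n+2) = complex_of_real (pp n) * (\<lambda>n. 0) (n+1) + complex_of_real (qq n) * (\<lambda>n. 0) n" for n by simp
      fix X4 X5 X6 assume l: "l2 X4" "l2 X5" "l2 X6" and T: "T1 X4 X5 X6 = (\<lambda>n. 0)" "T2 X4 X5 X6 = (\<lambda>n. 0)" "T3 X4 X5 X6 = (\<lambda>n. 0)"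
      note kd = ker_decomp[OF T] and kp = ker_parts[OF l T]
      have S0: "X4 n + X6 n = 0" for n using S_zero_L[OF _ kp(2) kd(3)] True by blast
      define \<kappa> where "\<kappa> = X4 0 - X6 0"
      have "X4 n - X6 n = \<kappa> * \<phi> n" for n
        unfolding \<phi>_def \<kappa>_def by (rule ps_unique[where \<rho>="\<lambda>n. complex_of_real (b n / c n)" and f="\<lambda>n. X4 n - X6 n", OF nzr kd(1)])
      thus "\<exists>\<alpha>. \<forall>n. X4 n + X6 n = \<alpha> * (\<lambda>n. 0) n \<and> X4 n - X6 n = \<alpha> * \<phi> n" using S0
        by (intro exI[of _ \<kappa>]) simp
    qed
  next
    case False
    hence G: "eL > bL" "eR < bR" using cond by auto
    define \<psi> where "\<psi> = ps (\<lambda>n. complex_of_real (ar n))"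
    have nzr: "complex_of_real (ar n) \<noteq> 0" for n using ar_pos[of n] by simp
    have st: "\<psi> (n+1) = complex_of_real (ar n) * \<psi> n" for n unfolding \<psi>_def by (rule ps_step[where \<rho>="\<lambda>n. complex_of_real (ar n)", OF nzr])
    show ?thesis
    proof (rule that[of "\<lambda>n. 0" \<psi>])
      show "l2 \<psi>" unfolding \<psi>_def using S_mode_l2 G by auto
      show "l2 (\<lambda>n. 0)" using l2_zero by simp
      show "\<psi> 0 + (\<lambda>n. 0) 0 \<noteq> 0" unfolding \<psi>_def by (simp add: ps_0)
      show "(\<lambda>n. 0) (n+1) = complex_of_real (b n / c n) * (\<lambda>n. 0) n" for n by simp
      show "\<psi> (n+2) = complex_of_real (pp n) * \<psi> (n+1) + complex_of_real (qq n) * \<psi> n" for n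
      proof -
        have e3: "complex_of_real (ar (n+1)) = complex_of_real (pp n) + complex_of_real (qq n) / complex_of_real (ar n)"
          using ar_step[of n] by simp
        have "\<psi> (n+2) = complex_of_real (ar (n+1)) * \<psi> (n+1)" using st[of "n+1"] by (simp add: add.assoc)
        thus ?thesis unfolding e3 st using nzr[of n] by (simp add: field_simps)
      qed
      fix X4 X5 X6 assume l: "l2 X4" "l2 X5" "l2 X6" and T: "T1 X4 X5 X6 = (\<lambda>n. 0)" "T2 X4 X5 X6 = (\<lambda>n. 0)" "T3 X4 X5 X6 = (\<lambda>n. 0)"
      note kd = ker_decomp[OF T] and kp = ker_parts[OF l T]
      have D0: "X4 n - X6 n = 0" for n using D_zero_L[OF G(1) kp(1) kd(1)] by blast
      have S1: "X4 (n+1) + X6 (n+1) = complex_of_real (ar n) * (X4 n + X6 n)" for n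
        by (rule S_first[OF kp(2)]) (rule kd(3))
      define \<kappa> where "\<kappa> = X4 0 + X6 0"
      have "X4 n + X6 n = \<kappa> * \<psi> n" for n
        unfolding \<psi>_def \<kappa>_def by (rule ps_unique[where \<rho>="\<lambda>n. complex_of_real (ar n)" and f="\<lambda>n. X4 n + X6 n", OF nzr S1])
      thus "\<exists>\<alpha>. \<forall>n. X4 n + X6 n = \<alpha> * \<psi> n \<and> X4 n - X6 n = \<alpha> * (\<lambda>n. 0) n" using D0
        by (intro exI[of _ \<kappa>]) simp
    qed
  qed
  define V4 where "V4 \<equiv> \<lambda>n. 1/2 * Sv n + 1/2 * Dv n"
  define V5 where "V5 \<equiv> \<lambda>n. complex_of_real (- b (n+2) / d n) * Sv (n+2)"
  define V6 where "V6 \<equiv> \<lambda>n. 1/2 * Sv n + (- 1/2) * Dv n"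
  have TV: "T1 V4 V5 V6 = (\<lambda>n. 0) \<and> T2 V4 V5 V6 = (\<lambda>n. 0) \<and> T3 V4 V5 V6 = (\<lambda>n. 0)"
    unfolding V4_def V5_def V6_def by (rule recon[OF rD rS])
  have l4: "l2 V4" unfolding V4_def
    by (rule conjunct1[OF l2_add[OF conjunct1[OF l2_cmult[OF lS]] conjunct1[OF l2_cmult[OF lD]]]])
  have l6: "l2 V6" unfolding V6_def
    by (rule conjunct1[OF l2_add[OF conjunct1[OF l2_cmult[OF lS]] conjunct1[OF l2_cmult[OF lD]]]])
  obtain B5 where B5: "\<And>n. cmod (complex_of_real (- b (n+2) / d n)) \<le> B5"
    using evc_bound[OF evc_comb[OF evc_shift[OF evc_b] evc_d, of "\<lambda>x y. - x / y" 2]] by auto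
  have l5: "l2 V5" unfolding V5_def
    by (rule conjunct1[OF l2_mult[OF B5 conjunct1[OF l2_shift[OF lS]]]])
  have v0: "V4 0 \<noteq> 0" unfolding V4_def using nz by (simp add: field_simps)
  have sp: "\<forall>X4 X5 X6. l2 X4 \<and> l2 X5 \<and> l2 X6 \<and> T1 X4 X5 X6 = (\<lambda>n. 0) \<and> T2 X4 X5 X6 = (\<lambda>n. 0) \<and> T3 X4 X5 X6 = (\<lambda>n. 0)
      \<longrightarrow> (\<exists>\<alpha>. X4 = (\<lambda>n. \<alpha> * V4 n) \<and> X5 = (\<lambda>n. \<alpha> * V5 n) \<and> X6 = (\<lambda>n. \<alpha> * V6 n))"
  proof (intro allI impI)
    fix X4 X5 X6 assume a: "l2 X4 \<and> l2 X5 \<and> l2 X6 \<and> T1 X4 X5 X6 = (\<lambda>n. 0) \<and> T2 X4 X5 X6 = (\<lambda>n. 0) \<and> T3 X4 X5 X6 = (\<lambda>n. 0)"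
    then obtain \<alpha> where \<alpha>: "\<And>n. X4 n + X6 n = \<alpha> * Sv n \<and> X4 n - X6 n = \<alpha> * Dv n" using span by blast
    have T: "T1 X4 X5 X6 = (\<lambda>n. 0)" "T2 X4 X5 X6 = (\<lambda>n. 0)" "T3 X4 X5 X6 = (\<lambda>n. 0)" using a by auto
    note kd = ker_decomp[OF T]
    have "X4 n = \<alpha> * V4 n" for n
    proof -
      have "X4 n = 1/2 * (X4 n + X6 n) + 1/2 * (X4 n - X6 n)" by (simp add: field_simps)
      also have "\<dots> = 1/2 * (\<alpha> * Sv n) + 1/2 * (\<alpha> * Dv n)" using \<alpha>[of n] by simp
      finally show ?thesis unfolding V4_def by (simp add: algebra_simps)
    qed
    moreover have "X6 n = \<alpha> * V6 n" for n
    proof -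
      have "X6 n = 1/2 * (X4 n + X6 n) + (- 1/2) * (X4 n - X6 n)" by (simp add: field_simps)
      also have "\<dots> = 1/2 * (\<alpha> * Sv n) + (- 1/2) * (\<alpha> * Dv n)" using \<alpha>[of n] by simp
      finally show ?thesis unfolding V6_def by (simp add: algebra_simps)
    qed
    moreover have "X5 n = \<alpha> * V5 n" for n
      unfolding V5_def using kd(2)[of n] \<alpha>[of "n+2"] by simp
    ultimately show "\<exists>\<alpha>. X4 = (\<lambda>n. \<alpha> * V4 n) \<and> X5 = (\<lambda>n. \<alpha> * V5 n) \<and> X6 = (\<lambda>n. \<alpha> * V6 n)"
      by (intro exI[of _ \<alpha>]) auto
  qed
  show ?thesis using l4 l5 l6 v0 TV sp by blast
qed

end

context chain begin

lemma T_l2: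
  assumes "l2 X4" "l2 X5" "l2 X6"
  shows "l2 (T1 X4 X5 X6) \<and> l2 (T2 X4 X5 X6) \<and> l2 (T3 X4 X5 X6)"
proof -
  obtain Bb where Bb: "\<And>n. cmod (complex_of_real (- b n)) \<le> Bb" using evc_bound[OF evc_un[OF evc_b, of uminus]] by auto
  obtain Bc where Bc: "\<And>n. cmod (complex_of_real (- c n)) \<le> Bc" using evc_bound[OF evc_un[OF evc_c, of uminus]] by auto
  obtain Bd where Bd: "\<And>n. cmod (complex_of_real (- d (n + -2))) \<le> Bd"
    using evc_bound[OF evc_un[OF evc_shift[OF evc_d, of "-2"], of uminus]] by auto
  have m: "l2 (\<lambda>n. complex_of_real (- b n) * X n)" if "l2 X" for X using l2_mult[OF Bb that] by simp
  have sh: "l2 (\<lambda>n. X (n + k))" if "l2 X" for X k using l2_shift[OF that] by simp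
  have a3: "l2 (\<lambda>n. f n + g n + h n)" if "l2 f" "l2 g" "l2 h" for f g h
    using l2_add[OF conjunct1[OF l2_add[OF that(1,2)]] that(3)] by simp
  have "l2 (\<lambda>n. complex_of_real (- b n) * X4 n + complex_of_real (- b n) * X5 n + complex_of_real (- c n) * X6 (n + 1))"
    by (rule a3[OF m[OF assms(1)] m[OF assms(2)]]) (rule conjunct1[OF l2_mult[OF Bc sh[OF assms(3)]]])
  moreover have "l2 (\<lambda>n. complex_of_real (- b n) * X4 n + complex_of_real (- d (n + -2)) * X5 (n + -2) + complex_of_real (- b n) * X6 n)"
    by (rule a3[OF m[OF assms(1)] _ m[OF assms(3)]]) (rule conjunct1[OF l2_mult[OF Bd sh[OF assms(2)]]])
  moreover have "l2 (\<lambda>n. complex_of_real (- c n) * X4 (n + 1) + complex_of_real (- b n) * X5 n + complex_of_real (- b n) * X6 n)"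
    by (rule a3[OF _ m[OF assms(2)] m[OF assms(3)]]) (rule conjunct1[OF l2_mult[OF Bc sh[OF assms(1)]]])
  moreover have "T1 X4 X5 X6 = (\<lambda>n. complex_of_real (- b n) * X4 n + complex_of_real (- b n) * X5 n + complex_of_real (- c n) * X6 (n + 1))"
    by (rule ext) (simp add: T1_def)
  moreover have "T2 X4 X5 X6 = (\<lambda>n. complex_of_real (- b n) * X4 n + complex_of_real (- d (n + -2)) * X5 (n + -2) + complex_of_real (- b n) * X6 n)"
    by (rule ext) (simp add: T2_def)
  moreover have "T3 X4 X5 X6 = (\<lambda>n. complex_of_real (- c n) * X4 (n + 1) + complex_of_real (- b n) * X5 n + complex_of_real (- b n) * X6 n)"
    by (rule ext) (simp add: T3_def)
  ultimately show ?thesis by simp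
qed

lemma T_zero: "T1 (\<lambda>n. 0) (\<lambda>n. 0) (\<lambda>n. 0) = (\<lambda>n. 0) \<and> T2 (\<lambda>n. 0) (\<lambda>n. 0) (\<lambda>n. 0) = (\<lambda>n. 0) \<and> T3 (\<lambda>n. 0) (\<lambda>n. 0) (\<lambda>n. 0) = (\<lambda>n. 0)"
  by (simp add: T1_def T2_def T3_def fun_eq_iff)

end

lemma l2_6_iff:
  "w \<in> l2_6 \<longleftrightarrow> (\<forall>n j. j \<notin> {1..6} \<longrightarrow> w n j = 0) \<and> (\<forall>j\<in>{1..6}. l2 (\<lambda>n. w n j))"
proof
  assume w: "w \<in> l2_6"
  hence z: "\<forall>n j. j \<notin> {1..6} \<longrightarrow> w n j = 0" and s: "(\<lambda>n. \<Sum>j\<in>{1..6}. (cmod (w n j))\<^sup>2) summable_on UNIV"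
    unfolding l2_6_def by auto
  have "l2 (\<lambda>n. w n j)" if j: "j \<in> {1..6}" for j
  proof -
    have "l2 (\<lambda>n. w n j) \<and> nrm (\<lambda>n. w n j) \<le> (\<Sum>\<^sub>\<infinity>n. \<Sum>j\<in>{1..6}. (cmod (w n j))\<^sup>2)"
    proof (rule l2I)
      fix F :: "int set" assume F: "finite F"
      have "(\<Sum>n\<in>F. (cmod (w n j))\<^sup>2) \<le> (\<Sum>n\<in>F. \<Sum>j\<in>{1..6}. (cmod (w n j))\<^sup>2)"
        by (rule sum_mono) (rule member_le_sum, use j in auto)
      also have "\<dots> \<le> (\<Sum>\<^sub>\<infinity>n. \<Sum>j\<in>{1..6}. (cmod (w n j))\<^sup>2)"
        by (rule finite_sum_le_infsum[OF s F]) (auto intro: sum_nonneg)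
      finally show "(\<Sum>n\<in>F. (cmod (w n j))\<^sup>2) \<le> (\<Sum>\<^sub>\<infinity>n. \<Sum>j\<in>{1..6}. (cmod (w n j))\<^sup>2)" .
    qed
    thus ?thesis by simp
  qed
  with z show "(\<forall>n j. j \<notin> {1..6} \<longrightarrow> w n j = 0) \<and> (\<forall>j\<in>{1..6}. l2 (\<lambda>n. w n j))" by blast
next
  assume a: "(\<forall>n j. j \<notin> {1..6} \<longrightarrow> w n j = 0) \<and> (\<forall>j\<in>{1..6}. l2 (\<lambda>n. w n j))"
  have "(\<lambda>n. \<Sum>j\<in>{1..6}. (cmod (w n j))\<^sup>2) summable_on (UNIV :: int set)"
  proof (rule nonneg_bdd_above_summable_on)
    show "bdd_above (sum (\<lambda>n. \<Sum>j\<in>{1..6}. (cmod (w n j))\<^sup>2) ` {F. F \<subseteq> UNIV \<and> finite F})"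
    proof (rule bdd_aboveI2)
      fix F :: "int set" assume "F \<in> {F. F \<subseteq> UNIV \<and> finite F}"
      hence F: "finite F" by simp
      have "(\<Sum>n\<in>F. \<Sum>j\<in>{1..6}. (cmod (w n j))\<^sup>2) = (\<Sum>j\<in>{1..6::nat}. \<Sum>n\<in>F. (cmod (w n j))\<^sup>2)"
        by (rule sum.swap)
      also have "\<dots> \<le> (\<Sum>j\<in>{1..6::nat}. nrm (\<lambda>n. w n j))"
        by (rule sum_mono) (use a l2_finite_le F in auto)
      finally show "(\<Sum>n\<in>F. \<Sum>j\<in>{1..6}. (cmod (w n j))\<^sup>2) \<le> (\<Sum>j\<in>{1..6::nat}. nrm (\<lambda>n. w n j))" .
    qed
  qed (auto intro: sum_nonneg)
  thus "w \<in> l2_6" unfolding l2_6_def using a by auto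
qed

lemma norm6_sq_le:
  assumes "w \<in> l2_6"
  shows "(l2_norm6 w)\<^sup>2 \<le> (\<Sum>j\<in>{1..6}. nrm (\<lambda>n. w n j))"
proof -
  have a: "\<forall>j\<in>{1..6}. l2 (\<lambda>n. w n j)" and s: "(\<lambda>n. \<Sum>j\<in>{1..6}. (cmod (w n j))\<^sup>2) summable_on UNIV"
    using assms unfolding l2_6_iff by auto (use assms l2_6_def in auto)
  have nn: "(\<Sum>\<^sub>\<infinity>n. \<Sum>j\<in>{1..6}. (cmod (w n j))\<^sup>2) \<ge> 0" by (rule infsum_nonneg) (auto intro: sum_nonneg)
  have "(\<Sum>\<^sub>\<infinity>n. \<Sum>j\<in>{1..6}. (cmod (w n j))\<^sup>2) \<le> (\<Sum>j\<in>{1..6}. nrm (\<lambda>n. w n j))"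
  proof (rule infsum_le_finite_sums[OF s])
    fix F :: "int set" assume F: "finite F"
    have "(\<Sum>n\<in>F. \<Sum>j\<in>{1..6}. (cmod (w n j))\<^sup>2) = (\<Sum>j\<in>{1..6::nat}. \<Sum>n\<in>F. (cmod (w n j))\<^sup>2)"
      by (rule sum.swap)
    also have "\<dots> \<le> (\<Sum>j\<in>{1..6::nat}. nrm (\<lambda>n. w n j))"
      by (rule sum_mono) (use a l2_finite_le F in auto)
    finally show "(\<Sum>n\<in>F. \<Sum>j\<in>{1..6}. (cmod (w n j))\<^sup>2) \<le> (\<Sum>j\<in>{1..6}. nrm (\<lambda>n. w n j))" .
  qed
  thus ?thesis unfolding l2_norm6_def using nn by simp
qed

lemma nrm_le_norm6:
  assumes "w \<in> l2_6" "j \<in> {1..6}"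
  shows "nrm (\<lambda>n. w n j) \<le> (l2_norm6 w)\<^sup>2"
proof -
  have a: "l2 (\<lambda>n. w n j)" using assms unfolding l2_6_iff by auto
  have s: "(\<lambda>n. \<Sum>j\<in>{1..6}. (cmod (w n j))\<^sup>2) summable_on UNIV" using assms(1) unfolding l2_6_def by auto
  have nn: "(\<Sum>\<^sub>\<infinity>n. \<Sum>j\<in>{1..6}. (cmod (w n j))\<^sup>2) \<ge> 0" by (rule infsum_nonneg) (auto intro: sum_nonneg)
  have "nrm (\<lambda>n. w n j) \<le> (\<Sum>\<^sub>\<infinity>n. \<Sum>j\<in>{1..6}. (cmod (w n j))\<^sup>2)"
    unfolding nrm_def
    by (rule infsum_mono[OF a[unfolded l2_def] s]) (rule member_le_sum, use assms(2) in auto)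
  thus ?thesis unfolding l2_norm6_def using nn by simp
qed

locale hsys =
  fixes bp bm dp dm c :: real
  assumes bp: "bp > 0" and bm: "bm > 0" and ep: "bp + dp > 0" and em: "bm + dm > 0" and c0: "c > 0"
begin

sublocale x: chain "bcoef bp bm" "ccoef bp bm dp dm c" "dcoef bp bm dp dm c" bm "bm + dm" bp "bp + dp" 3
  by unfold_locales (use bp bm ep em c0 in \<open>auto simp: bcoef_def ccoef_def dcoef_def\<close>)

sublocale y: chain "\<lambda>k. bcoef bp bm (-k)" "\<lambda>k. ccoef bp bm dp dm c (-k-1)" "\<lambda>k. dcoef bp bm dp dm c (-k-2)"
    bp "bp + dp" bm "bm + dm" 3
  by unfold_locales (use bp bm ep em c0 in \<open>auto simp: bcoef_def ccoef_def dcoef_def\<close>)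

abbreviation "H \<equiv> H_II bp bm dp dm c 0"

lemma Hx:
  "H w n 1 = x.T1 (\<lambda>n. w n 4) (\<lambda>n. w n 5) (\<lambda>n. w n 6) n"
  "H w n 2 = x.T2 (\<lambda>n. w n 4) (\<lambda>n. w n 5) (\<lambda>n. w n 6) n"
  "H w n 3 = x.T3 (\<lambda>n. w n 4) (\<lambda>n. w n 5) (\<lambda>n. w n 6) n"
  by (simp_all add: H_II_def Let_def x.T1_def x.T2_def x.T3_def)

lemma Hy:
  "H w n 4 = y.T1 (\<lambda>k. w (-k) 1) (\<lambda>k. w (-k) 2) (\<lambda>k. w (-k) 3) (-n)"
  "H w n 5 = y.T2 (\<lambda>k. w (-k) 1) (\<lambda>k. w (-k) 2) (\<lambda>k. w (-k) 3) (-n)"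
  "H w n 6 = y.T3 (\<lambda>k. w (-k) 1) (\<lambda>k. w (-k) 2) (\<lambda>k. w (-k) 3) (-n)"
  by (simp_all add: H_II_def Let_def y.T1_def y.T2_def y.T3_def algebra_simps)

lemma Hz: "j \<notin> {1..6} \<Longrightarrow> H w n j = 0"
  by (auto simp: H_II_def Let_def)

lemma H_diff: "H (\<lambda>n j. w1 n j - w2 n j) = (\<lambda>n j. H w1 n j - H w2 n j)"
  by (rule ext, rule ext) (simp add: H_II_def Let_def algebra_simps)

end

context hsys begin

lemma sum6: "(\<Sum>j\<in>{1..6::nat}. f j) = f 1 + f 2 + f 3 + f 4 + f 5 + f 6"
  by (simp add: eval_nat_numeral atLeastAtMostSuc_conv add_ac)

lemma comps:
  assumes "w \<in> l2_6"
  shows "\<And>j. j \<in> {1..6} \<Longrightarrow> l2 (\<lambda>n. w n j)" and "\<And>n j. j \<notin> {1..6} \<Longrightarrow> w n j = 0"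
  using assms unfolding l2_6_iff by auto

lemma refl_l2: "l2 f \<Longrightarrow> l2 (\<lambda>k. f (-k))" using l2_refl by blast

lemma comps6:
  assumes "w \<in> l2_6"
  shows "l2 (\<lambda>n. w n 1)" "l2 (\<lambda>n. w n 2)" "l2 (\<lambda>n. w n 3)" "l2 (\<lambda>n. w n 4)" "l2 (\<lambda>n. w n 5)" "l2 (\<lambda>n. w n 6)"
    "l2 (\<lambda>k. w (-k) 1)" "l2 (\<lambda>k. w (-k) 2)" "l2 (\<lambda>k. w (-k) 3)"
proof -
  show 1: "l2 (\<lambda>n. w n 1)" by (rule comps(1)[OF assms]) simp
  show 2: "l2 (\<lambda>n. w n 2)" by (rule comps(1)[OF assms]) simp
  show 3: "l2 (\<lambda>n. w n 3)" by (rule comps(1)[OF assms]) simp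
  show "l2 (\<lambda>n. w n 4)" by (rule comps(1)[OF assms]) simp
  show "l2 (\<lambda>n. w n 5)" by (rule comps(1)[OF assms]) simp
  show "l2 (\<lambda>n. w n 6)" by (rule comps(1)[OF assms]) simp
  show "l2 (\<lambda>k. w (-k) 1)" by (rule refl_l2[OF 1])
  show "l2 (\<lambda>k. w (-k) 2)" by (rule refl_l2[OF 2])
  show "l2 (\<lambda>k. w (-k) 3)" by (rule refl_l2[OF 3])
qed

lemma H_l2: "w \<in> l2_6 \<Longrightarrow> H w \<in> l2_6"
proof -
  assume w: "w \<in> l2_6"
  note c = comps6[OF w]
  have lx: "l2 (x.T1 (\<lambda>n. w n 4) (\<lambda>n. w n 5) (\<lambda>n. w n 6)) \<and> l2 (x.T2 (\<lambda>n. w n 4) (\<lambda>n. w n 5) (\<lambda>n. w n 6)) \<and> l2 (x.T3 (\<lambda>n. w n 4) (\<lambda>n. w n 5) (\<lambda>n. w n 6))"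
    by (rule x.T_l2[OF c(4,5,6)])
  have ly: "l2 (y.T1 (\<lambda>k. w (-k) 1) (\<lambda>k. w (-k) 2) (\<lambda>k. w (-k) 3)) \<and> l2 (y.T2 (\<lambda>k. w (-k) 1) (\<lambda>k. w (-k) 2) (\<lambda>k. w (-k) 3)) \<and> l2 (y.T3 (\<lambda>k. w (-k) 1) (\<lambda>k. w (-k) 2) (\<lambda>k. w (-k) 3))"
    by (rule y.T_l2[OF c(7,8,9)])
  have "l2 (\<lambda>n. H w n j)" if j: "j \<in> {1..6}" for j
  proof -
    have "j = 1 \<or> j = 2 \<or> j = 3 \<or> j = 4 \<or> j = 5 \<or> j = 6" using j by auto
    thus ?thesis
    proof (elim disjE)
      assume "j = 1" thus ?thesis by (simp only: Hx(1)) (rule conjunct1[OF lx])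
    next
      assume "j = 2" thus ?thesis by (simp only: Hx(2)) (rule conjunct1[OF conjunct2[OF lx]])
    next
      assume "j = 3" thus ?thesis by (simp only: Hx(3)) (rule conjunct2[OF conjunct2[OF lx]])
    next
      assume "j = 4" thus ?thesis by (simp only: Hy(1)) (rule refl_l2[OF conjunct1[OF ly]])
    next
      assume "j = 5" thus ?thesis by (simp only: Hy(2)) (rule refl_l2[OF conjunct1[OF conjunct2[OF ly]]])
    next
      assume "j = 6" thus ?thesis by (simp only: Hy(3)) (rule refl_l2[OF conjunct2[OF conjunct2[OF ly]]])
    qed
  qed
  thus "H w \<in> l2_6" unfolding l2_6_iff using Hz by auto
qed

lemma ker_zero_H:
  assumes dd: "dp * dm > 0" and w: "w \<in> l2_6" and Hw: "H w = (\<lambda>n j. 0)"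
  shows "w = (\<lambda>n j. 0)"
proof -
  note c = comps6[OF w] and cz = comps(2)[OF w]
  have condx: "(bm + dm > bm \<and> bp + dp > bp) \<or> (bm + dm < bm \<and> bp + dp < bp)"
    using dd by (auto simp: zero_less_mult_iff)
  have condy: "(bp + dp > bp \<and> bm + dm > bm) \<or> (bp + dp < bp \<and> bm + dm < bm)"
    using dd by (auto simp: zero_less_mult_iff)
  have h0: "H w n j = 0" for n j using Hw by simp
  have X: "(\<lambda>n. w n 4) = (\<lambda>n. 0) \<and> (\<lambda>n. w n 5) = (\<lambda>n. 0) \<and> (\<lambda>n. w n 6) = (\<lambda>n. 0)"
  proof (rule x.ker_zero[OF condx])
    show "l2 (\<lambda>n. w n 4)" "l2 (\<lambda>n. w n 5)" "l2 (\<lambda>n. w n 6)" using c by auto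
    show "x.T1 (\<lambda>n. w n 4) (\<lambda>n. w n 5) (\<lambda>n. w n 6) = (\<lambda>n. 0)" by (rule ext) (simp only: Hx(1)[symmetric] h0)
    show "x.T2 (\<lambda>n. w n 4) (\<lambda>n. w n 5) (\<lambda>n. w n 6) = (\<lambda>n. 0)" by (rule ext) (simp only: Hx(2)[symmetric] h0)
    show "x.T3 (\<lambda>n. w n 4) (\<lambda>n. w n 5) (\<lambda>n. w n 6) = (\<lambda>n. 0)" by (rule ext) (simp only: Hx(3)[symmetric] h0)
  qed
  have Y: "(\<lambda>k. w (-k) 1) = (\<lambda>n. 0) \<and> (\<lambda>k. w (-k) 2) = (\<lambda>n. 0) \<and> (\<lambda>k. w (-k) 3) = (\<lambda>n. 0)"
  proof (rule y.ker_zero[OF condy])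
    show "l2 (\<lambda>k. w (-k) 1)" "l2 (\<lambda>k. w (-k) 2)" "l2 (\<lambda>k. w (-k) 3)" using c by auto
    show "y.T1 (\<lambda>k. w (-k) 1) (\<lambda>k. w (-k) 2) (\<lambda>k. w (-k) 3) = (\<lambda>n. 0)"
    proof (rule ext)
      fix k show "y.T1 (\<lambda>k. w (-k) 1) (\<lambda>k. w (-k) 2) (\<lambda>k. w (-k) 3) k = 0"
        using Hy(1)[of w "-k"] h0[of "-k" 4] by simp
    qed
    show "y.T2 (\<lambda>k. w (-k) 1) (\<lambda>k. w (-k) 2) (\<lambda>k. w (-k) 3) = (\<lambda>n. 0)"
    proof (rule ext)
      fix k show "y.T2 (\<lambda>k. w (-k) 1) (\<lambda>k. w (-k) 2) (\<lambda>k. w (-k) 3) k = 0"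
        using Hy(2)[of w "-k"] h0[of "-k" 5] by simp
    qed
    show "y.T3 (\<lambda>k. w (-k) 1) (\<lambda>k. w (-k) 2) (\<lambda>k. w (-k) 3) = (\<lambda>n. 0)"
    proof (rule ext)
      fix k show "y.T3 (\<lambda>k. w (-k) 1) (\<lambda>k. w (-k) 2) (\<lambda>k. w (-k) 3) k = 0"
        using Hy(3)[of w "-k"] h0[of "-k" 6] by simp
    qed
  qed
  show ?thesis
  proof (rule ext, rule ext)
    fix n j
    show "w n j = 0"
    proof (cases "j \<in> {1..6}")
      case False then show ?thesis using cz by auto
    next
      case True
      hence "j = 1 \<or> j = 2 \<or> j = 3 \<or> j = 4 \<or> j = 5 \<or> j = 6" by auto
      thus ?thesis using X Y fun_cong[of "\<lambda>k. w (-k) 1" "\<lambda>n. 0" "-n"] fun_cong[of "\<lambda>k. w (-k) 2" "\<lambda>n. 0" "-n"]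
          fun_cong[of "\<lambda>k. w (-k) 3" "\<lambda>n. 0" "-n"] by (auto simp: fun_eq_iff)
    qed
  qed
qed

end

context hsys begin

lemma norm6_nonneg: "l2_norm6 w \<ge> 0"
  unfolding l2_norm6_def by (rule real_sqrt_ge_zero, rule infsum_nonneg) (auto intro: sum_nonneg)

lemma solve_H:
  assumes dd: "dp * dm > 0"
  shows "\<exists>C. \<forall>v\<in>l2_6. \<exists>w. w \<in> l2_6 \<and> H w = v \<and> l2_norm6 w \<le> C * l2_norm6 v"
proof -
  have condx: "(bm + dm > bm \<and> bp + dp > bp) \<or> (bm + dm < bm \<and> bp + dp < bp)"
    using dd by (auto simp: zero_less_mult_iff)
  have condy: "(bp + dp > bp \<and> bm + dm > bm) \<or> (bp + dp < bp \<and> bm + dm < bm)"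
    using dd by (auto simp: zero_less_mult_iff)
  obtain Kx where Kx: "\<forall>F1 F2 F3. l2 F1 \<and> l2 F2 \<and> l2 F3 \<longrightarrow> (\<exists>X4 X5 X6. l2 X4 \<and> l2 X5 \<and> l2 X6 \<and>
     nrm X4 + nrm X5 + nrm X6 \<le> Kx * (nrm F1 + nrm F2 + nrm F3) \<and>
     x.T1 X4 X5 X6 = F1 \<and> x.T2 X4 X5 X6 = F2 \<and> x.T3 X4 X5 X6 = F3)"
    using x.solveT[OF condx] by blast
  obtain Ky where Ky: "\<forall>F1 F2 F3. l2 F1 \<and> l2 F2 \<and> l2 F3 \<longrightarrow> (\<exists>X4 X5 X6. l2 X4 \<and> l2 X5 \<and> l2 X6 \<and>
     nrm X4 + nrm X5 + nrm X6 \<le> Ky * (nrm F1 + nrm F2 + nrm F3) \<and>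
     y.T1 X4 X5 X6 = F1 \<and> y.T2 X4 X5 X6 = F2 \<and> y.T3 X4 X5 X6 = F3)"
    using y.solveT[OF condy] by blast
  define K where "K = max Kx 0 + max Ky 0"
  have K0: "K \<ge> 0" and KxK: "Kx \<le> K" and KyK: "Ky \<le> K" unfolding K_def by auto
  show ?thesis
  proof (rule exI[of _ "sqrt (6 * K)"], intro ballI)
    fix v assume v: "v \<in> l2_6"
    note cv = comps6[OF v] and cvz = comps(2)[OF v]
    have cv4: "l2 (\<lambda>k. v (-k) 4)" "l2 (\<lambda>k. v (-k) 5)" "l2 (\<lambda>k. v (-k) 6)"
      using refl_l2[OF cv(4)] refl_l2[OF cv(5)] refl_l2[OF cv(6)] by auto
    obtain X4 X5 X6 where X: "l2 X4" "l2 X5" "l2 X6"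
      "nrm X4 + nrm X5 + nrm X6 \<le> Kx * (nrm (\<lambda>n. v n 1) + nrm (\<lambda>n. v n 2) + nrm (\<lambda>n. v n 3))"
      "x.T1 X4 X5 X6 = (\<lambda>n. v n 1)" "x.T2 X4 X5 X6 = (\<lambda>n. v n 2)" "x.T3 X4 X5 X6 = (\<lambda>n. v n 3)"
      using Kx cv(1,2,3) by blast
    obtain Y1 Y2 Y3 where Y: "l2 Y1" "l2 Y2" "l2 Y3"
      "nrm Y1 + nrm Y2 + nrm Y3 \<le> Ky * (nrm (\<lambda>k. v (-k) 4) + nrm (\<lambda>k. v (-k) 5) + nrm (\<lambda>k. v (-k) 6))"
      "y.T1 Y1 Y2 Y3 = (\<lambda>k. v (-k) 4)" "y.T2 Y1 Y2 Y3 = (\<lambda>k. v (-k) 5)" "y.T3 Y1 Y2 Y3 = (\<lambda>k. v (-k) 6)"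
      using Ky cv4 by blast
    define w where "w n j = (if j = 1 then Y1 (-n) else if j = 2 then Y2 (-n) else if j = 3 then Y3 (-n)
       else if j = 4 then X4 n else if j = 5 then X5 n else if j = 6 then X6 n else 0)" for n :: int and j :: nat
    have w1: "(\<lambda>n. w n 1) = (\<lambda>n. Y1 (-n))" "(\<lambda>n. w n 2) = (\<lambda>n. Y2 (-n))" "(\<lambda>n. w n 3) = (\<lambda>n. Y3 (-n))"
      "(\<lambda>n. w n 4) = X4" "(\<lambda>n. w n 5) = X5" "(\<lambda>n. w n 6) = X6"
      by (auto simp: w_def fun_eq_iff)
    have w2: "(\<lambda>k. w (-k) 1) = Y1" "(\<lambda>k. w (-k) 2) = Y2" "(\<lambda>k. w (-k) 3) = Y3"
      by (auto simp: w_def fun_eq_iff)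
    have wl2: "w \<in> l2_6" unfolding l2_6_iff
    proof (intro conjI allI impI ballI)
      fix n j assume "j \<notin> {1..6::nat}" thus "w n j = 0" unfolding w_def by auto
    next
      fix j :: nat assume j: "j \<in> {1..6}"
      hence "j = 1 \<or> j = 2 \<or> j = 3 \<or> j = 4 \<or> j = 5 \<or> j = 6" by auto
      thus "l2 (\<lambda>n. w n j)"
        using w1 refl_l2[OF Y(1)] refl_l2[OF Y(2)] refl_l2[OF Y(3)] X(1,2,3) by auto
    qed
    have Hw: "H w = v"
    proof (rule ext, rule ext)
      fix n j
      show "H w n j = v n j"
      proof (cases "j \<in> {1..6}")
        case False then show ?thesis using Hz cvz by auto
      next
        case True
        hence "j = 1 \<or> j = 2 \<or> j = 3 \<or> j = 4 \<or> j = 5 \<or> j = 6" by auto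
        thus ?thesis
        proof (elim disjE)
          assume "j = 1" thus ?thesis by (simp only: Hx(1) w1 X(5))
        next
          assume "j = 2" thus ?thesis by (simp only: Hx(2) w1 X(6))
        next
          assume "j = 3" thus ?thesis by (simp only: Hx(3) w1 X(7))
        next
          assume "j = 4" thus ?thesis by (simp only: Hy(1) w2 Y(5) minus_minus)
        next
          assume "j = 5" thus ?thesis by (simp only: Hy(2) w2 Y(6) minus_minus)
        next
          assume "j = 6" thus ?thesis by (simp only: Hy(3) w2 Y(7) minus_minus)
        qed
      qed
    qed
    have "(l2_norm6 w)\<^sup>2 \<le> (\<Sum>j\<in>{1..6}. nrm (\<lambda>n. w n j))" by (rule norm6_sq_le[OF wl2])
    also have "\<dots> = nrm (\<lambda>n. Y1 (-n)) + nrm (\<lambda>n. Y2 (-n)) + nrm (\<lambda>n. Y3 (-n)) + nrm X4 + nrm X5 + nrm X6"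
      unfolding sum6 w1 ..
    also have "\<dots> \<le> (nrm Y1 + nrm Y2 + nrm Y3) + (nrm X4 + nrm X5 + nrm X6)"
      using conjunct2[OF l2_refl[OF Y(1)]] conjunct2[OF l2_refl[OF Y(2)]] conjunct2[OF l2_refl[OF Y(3)]] by simp
    also have "\<dots> \<le> Ky * (nrm (\<lambda>k. v (-k) 4) + nrm (\<lambda>k. v (-k) 5) + nrm (\<lambda>k. v (-k) 6))
        + Kx * (nrm (\<lambda>n. v n 1) + nrm (\<lambda>n. v n 2) + nrm (\<lambda>n. v n 3))"
      using X(4) Y(4) by linarith
    also have "\<dots> \<le> K * (nrm (\<lambda>n. v n 4) + nrm (\<lambda>n. v n 5) + nrm (\<lambda>n. v n 6))
        + K * (nrm (\<lambda>n. v n 1) + nrm (\<lambda>n. v n 2) + nrm (\<lambda>n. v n 3))"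
    proof (rule add_mono)
      have a: "nrm (\<lambda>k. v (-k) 4) + nrm (\<lambda>k. v (-k) 5) + nrm (\<lambda>k. v (-k) 6)
          \<le> nrm (\<lambda>n. v n 4) + nrm (\<lambda>n. v n 5) + nrm (\<lambda>n. v n 6)"
        using conjunct2[OF l2_refl[OF cv(4)]] conjunct2[OF l2_refl[OF cv(5)]] conjunct2[OF l2_refl[OF cv(6)]] by simp
      have a0: "0 \<le> nrm (\<lambda>k. v (-k) 4) + nrm (\<lambda>k. v (-k) 5) + nrm (\<lambda>k. v (-k) 6)"
        using nrm_nonneg by (simp add: add_nonneg_nonneg)
      have "Ky * (nrm (\<lambda>k. v (-k) 4) + nrm (\<lambda>k. v (-k) 5) + nrm (\<lambda>k. v (-k) 6))
          \<le> K * (nrm (\<lambda>k. v (-k) 4) + nrm (\<lambda>k. v (-k) 5) + nrm (\<lambda>k. v (-k) 6))"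
        by (rule mult_right_mono[OF KyK a0])
      also have "\<dots> \<le> K * (nrm (\<lambda>n. v n 4) + nrm (\<lambda>n. v n 5) + nrm (\<lambda>n. v n 6))"
        by (rule mult_left_mono[OF a K0])
      finally show "Ky * (nrm (\<lambda>k. v (-k) 4) + nrm (\<lambda>k. v (-k) 5) + nrm (\<lambda>k. v (-k) 6))
          \<le> K * (nrm (\<lambda>n. v n 4) + nrm (\<lambda>n. v n 5) + nrm (\<lambda>n. v n 6))" .
      have b0: "0 \<le> nrm (\<lambda>n. v n 1) + nrm (\<lambda>n. v n 2) + nrm (\<lambda>n. v n 3)"
        using nrm_nonneg by (simp add: add_nonneg_nonneg)
      show "Kx * (nrm (\<lambda>n. v n 1) + nrm (\<lambda>n. v n 2) + nrm (\<lambda>n. v n 3))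
          \<le> K * (nrm (\<lambda>n. v n 1) + nrm (\<lambda>n. v n 2) + nrm (\<lambda>n. v n 3))"
        by (rule mult_right_mono[OF KxK b0])
    qed
    also have "\<dots> = K * (\<Sum>j\<in>{1..6}. nrm (\<lambda>n. v n j))" unfolding sum6 by (simp add: algebra_simps)
    also have "\<dots> \<le> K * (\<Sum>j\<in>{1..6::nat}. (l2_norm6 v)\<^sup>2)"
      by (rule mult_left_mono[OF sum_mono K0]) (rule nrm_le_norm6[OF v], simp)
    also have "\<dots> = (6 * K) * (l2_norm6 v)\<^sup>2" by simp
    finally have sq: "(l2_norm6 w)\<^sup>2 \<le> (6 * K) * (l2_norm6 v)\<^sup>2" .
    have "l2_norm6 w = sqrt ((l2_norm6 w)\<^sup>2)" using norm6_nonneg[of w] by simp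
    also have "\<dots> \<le> sqrt ((6 * K) * (l2_norm6 v)\<^sup>2)" by (rule real_sqrt_le_mono[OF sq])
    also have "\<dots> = sqrt (6 * K) * l2_norm6 v" using norm6_nonneg[of v] by (simp add: real_sqrt_mult)
    finally show "\<exists>w. w \<in> l2_6 \<and> H w = v \<and> l2_norm6 w \<le> sqrt (6 * K) * l2_norm6 v"
      using wl2 Hw by blast
  qed
qed

end

context hsys begin

lemma l2_6_diff: "w1 \<in> l2_6 \<Longrightarrow> w2 \<in> l2_6 \<Longrightarrow> (\<lambda>n j. w1 n j - w2 n j) \<in> l2_6"
proof -
  assume a: "w1 \<in> l2_6" "w2 \<in> l2_6"
  show ?thesis unfolding l2_6_iff
  proof (intro conjI allI impI ballI)
    fix n j assume "j \<notin> {1..6::nat}" thus "w1 n j - w2 n j = 0" using comps(2)[OF a(1)] comps(2)[OF a(2)] by simp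
  next
    fix j :: nat assume j: "j \<in> {1..6}"
    have "l2 (\<lambda>n. w1 n j + (-1) * w2 n j)"
      using l2_add[OF comps(1)[OF a(1) j] conjunct1[OF l2_cmult[where a="-1", OF comps(1)[OF a(2) j]]]] by simp
    thus "l2 (\<lambda>n. w1 n j - w2 n j)" by simp
  qed
qed

lemma zero_l2_6: "(\<lambda>n j. 0) \<in> l2_6"
  unfolding l2_6_iff using l2_zero by auto

lemma H_zero: "H (\<lambda>n j. 0) = (\<lambda>n j. 0)"
  by (rule ext, rule ext) (simp add: H_II_def Let_def)

lemma part_ii:
  assumes dd: "dp * dm > 0"
  shows "invertible_l2 H \<and> ker_H_II bp bm dp dm c 0 = {\<lambda>n j. 0}"
proof
  obtain C where C: "\<forall>v\<in>l2_6. \<exists>w. w \<in> l2_6 \<and> H w = v \<and> l2_norm6 w \<le> C * l2_norm6 v"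
    using solve_H[OF dd] by blast
  define G where "G v = (SOME w. w \<in> l2_6 \<and> H w = v \<and> l2_norm6 w \<le> C * l2_norm6 v)" for v
  have G: "G v \<in> l2_6 \<and> H (G v) = v \<and> l2_norm6 (G v) \<le> C * l2_norm6 v" if "v \<in> l2_6" for v
  proof -
    from C that obtain w where "w \<in> l2_6 \<and> H w = v \<and> l2_norm6 w \<le> C * l2_norm6 v" by blast
    thus ?thesis unfolding G_def by (rule someI[where P="\<lambda>w. w \<in> l2_6 \<and> H w = v \<and> l2_norm6 w \<le> C * l2_norm6 v"])
  qed
  have GH: "G (H w) = w" if w: "w \<in> l2_6" for w
  proof -
    have Hw: "H w \<in> l2_6" by (rule H_l2[OF w])
    have d: "(\<lambda>n j. G (H w) n j - w n j) \<in> l2_6" by (rule l2_6_diff[OF conjunct1[OF G[OF Hw]] w])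
    have "H (\<lambda>n j. G (H w) n j - w n j) = (\<lambda>n j. 0)"
      unfolding H_diff using G[OF Hw] by simp
    hence "(\<lambda>n j. G (H w) n j - w n j) = (\<lambda>n j. 0)" by (rule ker_zero_H[OF dd d])
    thus ?thesis by (simp add: fun_eq_iff)
  qed
  show "invertible_l2 H" unfolding invertible_l2_def
    by (rule exI[of _ G]) (use G GH in blast)
  show "ker_H_II bp bm dp dm c 0 = {\<lambda>n j. 0}"
    unfolding ker_H_II_def using ker_zero_H[OF dd] zero_l2_6 H_zero by auto
qed

end

context hsys begin

lemma part_i:
  assumes dd: "dp * dm < 0"
  shows "two_dim (ker_H_II bp bm dp dm c 0)"
proof -
  have condx: "(bm + dm < bm \<and> bp + dp > bp) \<or> (bm + dm > bm \<and> bp + dp < bp)"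
    using dd by (auto simp: mult_less_0_iff)
  have condy: "(bp + dp < bp \<and> bm + dm > bm) \<or> (bp + dp > bp \<and> bm + dm < bm)"
    using dd by (auto simp: mult_less_0_iff)
  obtain V4 V5 V6 where V: "l2 V4" "l2 V5" "l2 V6" "V4 0 \<noteq> 0"
    "x.T1 V4 V5 V6 = (\<lambda>n. 0)" "x.T2 V4 V5 V6 = (\<lambda>n. 0)" "x.T3 V4 V5 V6 = (\<lambda>n. 0)"
    and Vs: "\<forall>X4 X5 X6. l2 X4 \<and> l2 X5 \<and> l2 X6 \<and> x.T1 X4 X5 X6 = (\<lambda>n. 0) \<and> x.T2 X4 X5 X6 = (\<lambda>n. 0) \<and> x.T3 X4 X5 X6 = (\<lambda>n. 0)
      \<longrightarrow> (\<exists>\<alpha>. X4 = (\<lambda>n. \<alpha> * V4 n) \<and> X5 = (\<lambda>n. \<alpha> * V5 n) \<and> X6 = (\<lambda>n. \<alpha> * V6 n))"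
    using x.ker_one[OF condx] by blast
  obtain W1 W2 W3 where W: "l2 W1" "l2 W2" "l2 W3" "W1 0 \<noteq> 0"
    "y.T1 W1 W2 W3 = (\<lambda>n. 0)" "y.T2 W1 W2 W3 = (\<lambda>n. 0)" "y.T3 W1 W2 W3 = (\<lambda>n. 0)"
    and Ws: "\<forall>X4 X5 X6. l2 X4 \<and> l2 X5 \<and> l2 X6 \<and> y.T1 X4 X5 X6 = (\<lambda>n. 0) \<and> y.T2 X4 X5 X6 = (\<lambda>n. 0) \<and> y.T3 X4 X5 X6 = (\<lambda>n. 0)
      \<longrightarrow> (\<exists>\<alpha>. X4 = (\<lambda>n. \<alpha> * W1 n) \<and> X5 = (\<lambda>n. \<alpha> * W2 n) \<and> X6 = (\<lambda>n. \<alpha> * W3 n))"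
    using y.ker_one[OF condy] by blast
  define u where "u n j = (if j = 4 then V4 n else if j = 5 then V5 n else if j = 6 then V6 n else 0)" for n :: int and j :: nat
  define v where "v n j = (if j = 1 then W1 (-n) else if j = 2 then W2 (-n) else if j = 3 then W3 (-n) else 0)" for n :: int and j :: nat
  have u1: "(\<lambda>n. u n 4) = V4" "(\<lambda>n. u n 5) = V5" "(\<lambda>n. u n 6) = V6"
    "(\<lambda>k. u (-k) 1) = (\<lambda>k. 0)" "(\<lambda>k. u (-k) 2) = (\<lambda>k. 0)" "(\<lambda>k. u (-k) 3) = (\<lambda>k. 0)"
    by (auto simp: u_def fun_eq_iff)
  have v1: "(\<lambda>n. v n 4) = (\<lambda>n. 0)" "(\<lambda>n. v n 5) = (\<lambda>n. 0)" "(\<lambda>n. v n 6) = (\<lambda>n. 0)"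
    "(\<lambda>k. v (-k) 1) = W1" "(\<lambda>k. v (-k) 2) = W2" "(\<lambda>k. v (-k) 3) = W3"
    by (auto simp: v_def fun_eq_iff)
  have xz: "x.T1 (\<lambda>n. 0) (\<lambda>n. 0) (\<lambda>n. 0) = (\<lambda>n. 0) \<and> x.T2 (\<lambda>n. 0) (\<lambda>n. 0) (\<lambda>n. 0) = (\<lambda>n. 0) \<and> x.T3 (\<lambda>n. 0) (\<lambda>n. 0) (\<lambda>n. 0) = (\<lambda>n. 0)"
    by (rule x.T_zero)
  have yz: "y.T1 (\<lambda>n. 0) (\<lambda>n. 0) (\<lambda>n. 0) = (\<lambda>n. 0) \<and> y.T2 (\<lambda>n. 0) (\<lambda>n. 0) (\<lambda>n. 0) = (\<lambda>n. 0) \<and> y.T3 (\<lambda>n. 0) (\<lambda>n. 0) (\<lambda>n. 0) = (\<lambda>n. 0)"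
    by (rule y.T_zero)
  have six: "j \<in> {1..6} \<Longrightarrow> j = 1 \<or> j = 2 \<or> j = 3 \<or> j = 4 \<or> j = 5 \<or> j = 6" for j :: nat by auto
  have uk: "u \<in> ker_H_II bp bm dp dm c 0"
  proof -
    have "u \<in> l2_6" unfolding l2_6_iff
    proof (intro conjI allI impI ballI)
      fix n j assume "j \<notin> {1..6::nat}" thus "u n j = 0" unfolding u_def by auto
    next
      fix j :: nat assume "j \<in> {1..6}"
      thus "l2 (\<lambda>n. u n j)" using six[of j] V(1,2,3) l2_zero unfolding u_def by auto
    qed
    moreover have "H u = (\<lambda>n j. 0)"
    proof (rule ext, rule ext)
      fix n j
      show "H u n j = 0"
      proof (cases "j \<in> {1..6}")
        case False then show ?thesis using Hz by auto
      next
        case True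
        thus ?thesis
        proof (elim six[THEN disjE] disjE)
          assume "j = 1" thus ?thesis by (simp only: Hx(1) u1 V(5))
        next
          assume "j = 2" thus ?thesis by (simp only: Hx(2) u1 V(6))
        next
          assume "j = 3" thus ?thesis by (simp only: Hx(3) u1 V(7))
        next
          assume "j = 4" thus ?thesis using yz by (simp only: Hy(1) u1)
        next
          assume "j = 5" thus ?thesis using yz by (simp only: Hy(2) u1)
        next
          assume "j = 6" thus ?thesis using yz by (simp only: Hy(3) u1)
        qed
      qed
    qed
    ultimately show ?thesis unfolding ker_H_II_def by simp
  qed
  have vk: "v \<in> ker_H_II bp bm dp dm c 0"
  proof -
    have "v \<in> l2_6" unfolding l2_6_iff
    proof (intro conjI allI impI ballI)
      fix n j assume "j \<notin> {1..6::nat}" thus "v n j = 0" unfolding v_def by auto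
    next
      fix j :: nat assume "j \<in> {1..6}"
      thus "l2 (\<lambda>n. v n j)" using six[of j] refl_l2[OF W(1)] refl_l2[OF W(2)] refl_l2[OF W(3)] l2_zero unfolding v_def by auto
    qed
    moreover have "H v = (\<lambda>n j. 0)"
    proof (rule ext, rule ext)
      fix n j
      show "H v n j = 0"
      proof (cases "j \<in> {1..6}")
        case False then show ?thesis using Hz by auto
      next
        case True
        thus ?thesis
        proof (elim six[THEN disjE] disjE)
          assume "j = 1" thus ?thesis using xz by (simp only: Hx(1) v1)
        next
          assume "j = 2" thus ?thesis using xz by (simp only: Hx(2) v1)
        next
          assume "j = 3" thus ?thesis using xz by (simp only: Hx(3) v1)
        next
          assume "j = 4" thus ?thesis by (simp only: Hy(1) v1 W(5))
        next
          assume "j = 5" thus ?thesis by (simp only: Hy(2) v1 W(6))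
        next
          assume "j = 6" thus ?thesis by (simp only: Hy(3) v1 W(7))
        qed
      qed
    qed
    ultimately show ?thesis unfolding ker_H_II_def by simp
  qed
  have indep: "\<forall>a b :: complex. (\<lambda>n j. a * u n j + b * v n j) = (\<lambda>n j. 0) \<longrightarrow> a = 0 \<and> b = 0"
  proof (intro allI impI)
    fix a b :: complex assume z: "(\<lambda>n j. a * u n j + b * v n j) = (\<lambda>n j. 0)"
    have "a * u 0 4 + b * v 0 4 = 0" using z by (simp add: fun_eq_iff)
    hence "a * V4 0 = 0" unfolding u_def v_def by simp
    moreover have "a * u 0 1 + b * v 0 1 = 0" using z by (simp add: fun_eq_iff)
    hence "b * W1 0 = 0" unfolding u_def v_def by simp
    ultimately show "a = 0 \<and> b = 0" using V(4) W(4) by simp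
  qed
  have span: "\<forall>w\<in>ker_H_II bp bm dp dm c 0. \<exists>a b :: complex. w = (\<lambda>n j. a * u n j + b * v n j)"
  proof
    fix w assume "w \<in> ker_H_II bp bm dp dm c 0"
    hence w: "w \<in> l2_6" and Hw: "H w = (\<lambda>n j. 0)" unfolding ker_H_II_def by auto
    note cw = comps6[OF w] and cwz = comps(2)[OF w]
    have h0: "H w n j = 0" for n j using Hw by simp
    obtain \<alpha> where \<alpha>: "(\<lambda>n. w n 4) = (\<lambda>n. \<alpha> * V4 n)" "(\<lambda>n. w n 5) = (\<lambda>n. \<alpha> * V5 n)" "(\<lambda>n. w n 6) = (\<lambda>n. \<alpha> * V6 n)"
    proof -
      have "x.T1 (\<lambda>n. w n 4) (\<lambda>n. w n 5) (\<lambda>n. w n 6) = (\<lambda>n. 0)" by (rule ext) (simp only: Hx(1)[symmetric] h0)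
      moreover have "x.T2 (\<lambda>n. w n 4) (\<lambda>n. w n 5) (\<lambda>n. w n 6) = (\<lambda>n. 0)" by (rule ext) (simp only: Hx(2)[symmetric] h0)
      moreover have "x.T3 (\<lambda>n. w n 4) (\<lambda>n. w n 5) (\<lambda>n. w n 6) = (\<lambda>n. 0)" by (rule ext) (simp only: Hx(3)[symmetric] h0)
      ultimately show ?thesis using Vs cw(4,5,6) that by blast
    qed
    obtain \<beta> where \<beta>: "(\<lambda>k. w (-k) 1) = (\<lambda>n. \<beta> * W1 n)" "(\<lambda>k. w (-k) 2) = (\<lambda>n. \<beta> * W2 n)" "(\<lambda>k. w (-k) 3) = (\<lambda>n. \<beta> * W3 n)"
    proof -
      have "y.T1 (\<lambda>k. w (-k) 1) (\<lambda>k. w (-k) 2) (\<lambda>k. w (-k) 3) = (\<lambda>n. 0)"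
      proof (rule ext)
        fix k show "y.T1 (\<lambda>k. w (-k) 1) (\<lambda>k. w (-k) 2) (\<lambda>k. w (-k) 3) k = 0"
          using Hy(1)[of w "-k"] h0[of "-k" 4] by simp
      qed
      moreover have "y.T2 (\<lambda>k. w (-k) 1) (\<lambda>k. w (-k) 2) (\<lambda>k. w (-k) 3) = (\<lambda>n. 0)"
      proof (rule ext)
        fix k show "y.T2 (\<lambda>k. w (-k) 1) (\<lambda>k. w (-k) 2) (\<lambda>k. w (-k) 3) k = 0"
          using Hy(2)[of w "-k"] h0[of "-k" 5] by simp
      qed
      moreover have "y.T3 (\<lambda>k. w (-k) 1) (\<lambda>k. w (-k) 2) (\<lambda>k. w (-k) 3) = (\<lambda>n. 0)"
      proof (rule ext)
        fix k show "y.T3 (\<lambda>k. w (-k) 1) (\<lambda>k. w (-k) 2) (\<lambda>k. w (-k) 3) k = 0"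
          using Hy(3)[of w "-k"] h0[of "-k" 6] by simp
      qed
      ultimately show ?thesis using Ws cw(7,8,9) that by blast
    qed
    have "w = (\<lambda>n j. \<alpha> * u n j + \<beta> * v n j)"
    proof (rule ext, rule ext)
      fix n j
      show "w n j = \<alpha> * u n j + \<beta> * v n j"
      proof (cases "j \<in> {1..6}")
        case False then show ?thesis using cwz unfolding u_def v_def by auto
      next
        case True
        have a4: "w n 4 = \<alpha> * V4 n" "w n 5 = \<alpha> * V5 n" "w n 6 = \<alpha> * V6 n"
          using \<alpha> by (auto dest: fun_cong[of _ _ n])
        have b1: "w n 1 = \<beta> * W1 (-n)" "w n 2 = \<beta> * W2 (-n)" "w n 3 = \<beta> * W3 (-n)"
          using fun_cong[OF \<beta>(1), of "-n"] fun_cong[OF \<beta>(2), of "-n"] fun_cong[OF \<beta>(3), of "-n"] by auto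
        from six[OF True] show ?thesis
          using a4 b1 unfolding u_def v_def by auto
      qed
    qed
    thus "\<exists>a b :: complex. w = (\<lambda>n j. a * u n j + b * v n j)" by blast
  qed
  show ?thesis unfolding two_dim_def using uk vk indep span by blast
qed

end

theorem theorem14:
  fixes bp bm dp dm c :: real
  assumes "bp > 0" and "bm > 0" and "bp + dp > 0" and "bm + dm > 0" and "c > 0"
  shows "(dp * dm < 0 \<longrightarrow> two_dim (ker_H_II bp bm dp dm c 0)) \<and>
         (dp * dm > 0 \<longrightarrow> invertible_l2 (H_II bp bm dp dm c 0) \<and>
                         ker_H_II bp bm dp dm c 0 = {\<lambda>n j. 0})"
proof -
  interpret hsys bp bm dp dm c using assms by unfold_locales
  show ?thesis using part_i part_ii by blast
qed

end
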